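(* Let $G=(S,T,\pi)$ be a countable two-person win-lose game such that the family $\mathcal{B}^1_{\downarrow}(G)$ is ascending-union closed. Then for every $\mathbf{q}\in\Delta(T)$ the supremum $\sup_{\mathbf{p}\in\Delta(S)}\pi^{\mathrm{mix}}(\mathbf{p},\mathbf{q})$ is attained, the supremum $\sup_{\mathbf{p}\in\Delta(S)}\inf_{\mathbf{q}\in\Delta(T)}\pi^{\mathrm{mix}}(\mathbf{p},\mathbf{q})$ is attained, and $$\max_{\mathbf{p}\in\Delta(S)}\inf_{\mathbf{q}\in\Delta(T)}\pi^{\mathrm{mix}}(\mathbf{p},\mathbf{q})=\inf_{\mathbf{q}\in\Delta(T)}\max_{\mathbf{p}\in\Delta(S)}\pi^{\mathrm{mix}}(\mathbf{p},\mathbf{q}).$$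
   Context: A two-person win-lose game is a triple $G=(S,T,\pi)$ where $S,T$ are non-empty sets (possibly infinite) and $\pi:S\times T\to\{0,1\}$. It is countable if $|S|=|T|=\aleph_0$. For a set $X$, $\Delta(X)$ denotes the set of probability distributions $\mathbf{p}=(p_x)_{x\in X}$ on $X$ with at most countable support ($p_x\ge 0$, $\sum_x p_x=1$). For $\mathbf{p}\in\Delta(S)$, $\mathbf{q}\in\Delta(T)$, $\pi^{\mathrm{mix}}(\mathbf{p},\mathbf{q})=\sum_{s,t}p_sq_t\pi(s,t)$. For $s\in S$ let $B_s=\{t\in T:\pi(s,t)=1\}$, let $\mathcal{B}^1(G)=\{B_s:s\in S\}$, and let $\mathcal{B}^1_{\downarrow}(G)=\{A\subseteq T:\exists s\in S,\ A\subseteq B_s\}$. A family $\mathcal{F}$ of sets is ascending-union closed if whenever $A_i\in\mathcal{F}$ for $i=1,2,\ldots$ and $A_1\subset A_2\subset\cdots$, then $\bigcup_{i=1}^\infty A_i\in\mathcal{F}$. *)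

theory Defs
  imports "HOL-Analysis.Analysis"
begin

definition win_lose_game :: "'a set \<Rightarrow> 'b set \<Rightarrow> ('a \<Rightarrow> 'b \<Rightarrow> real) \<Rightarrow> bool" where
  "win_lose_game S T \<pi> \<longleftrightarrow> S \<noteq> {} \<and> T \<noteq> {} \<and> (\<forall>s\<in>S. \<forall>t\<in>T. \<pi> s t \<in> {0, 1})"

definition countable_game :: "'a set \<Rightarrow> 'b set \<Rightarrow> ('a \<Rightarrow> 'b \<Rightarrow> real) \<Rightarrow> bool" where
  "countable_game S T \<pi> \<longleftrightarrow> win_lose_game S T \<pi> \<and>
     countable S \<and> infinite S \<and> countable T \<and> infinite T"

definition Dist :: "'a set \<Rightarrow> ('a \<Rightarrow> real) set" where
  "Dist X = {p. (\<forall>x. p x \<ge> 0) \<and> (\<forall>x. x \<notin> X \<longrightarrow> p x = 0)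
              \<and> countable {x. p x \<noteq> 0} \<and> (p has_sum 1) X}"

definition pi_mix :: "'a set \<Rightarrow> 'b set \<Rightarrow> ('a \<Rightarrow> 'b \<Rightarrow> real) \<Rightarrow> ('a \<Rightarrow> real) \<Rightarrow> ('b \<Rightarrow> real) \<Rightarrow> real" where
  "pi_mix S T \<pi> p q = (\<Sum>\<^sub>\<infinity>(s, t)\<in>S \<times> T. p s * q t * \<pi> s t)"

definition win_set :: "'b set \<Rightarrow> ('a \<Rightarrow> 'b \<Rightarrow> real) \<Rightarrow> 'a \<Rightarrow> 'b set" where
  "win_set T \<pi> s = {t\<in>T. \<pi> s t = 1}"

definition B1_down :: "'a set \<Rightarrow> 'b set \<Rightarrow> ('a \<Rightarrow> 'b \<Rightarrow> real) \<Rightarrow> 'b set set" where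
  "B1_down S T \<pi> = {A. \<exists>s\<in>S. A \<subseteq> win_set T \<pi> s}"

definition ascending_union_closed :: "'c set set \<Rightarrow> bool" where
  "ascending_union_closed F \<longleftrightarrow>
     (\<forall>A :: nat \<Rightarrow> 'c set. (\<forall>i. A i \<in> F) \<and> (\<forall>i. A i \<subset> A (Suc i)) \<longrightarrow> (\<Union>i. A i) \<in> F)"

end

theory Submission
  imports Defs "HOL-Library.Nat_Bijection"
begin


lemma bw_countable:
  fixes X :: "nat \<Rightarrow> ('i::countable) \<Rightarrow> real"
  assumes "\<And>n j. X n j \<in> {0..1}"
  shows "\<exists>r l. strict_mono r \<and> (\<forall>j. (\<lambda>n. X (r n) j) \<longlonglongrightarrow> l j)"
proof -
  let ?K = "PiE UNIV (\<lambda>_::'i. {0..1::real})"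
  have "compactin (product_topology (\<lambda>_. euclidean) UNIV) ?K"
    by (subst compactin_PiE) auto
  hence "compact ?K"
    by (simp add: euclidean_product_topology compactin_euclidean_iff)
  hence "seq_compact ?K" by (rule compact_imp_seq_compact)
  moreover have "\<forall>n. X n \<in> ?K" using assms by auto
  ultimately obtain l r where "l \<in> ?K" "strict_mono r" "(X \<circ> r) \<longlonglongrightarrow> l"
    unfolding seq_compact_def by metis
  moreover have "(\<lambda>n. X (r n) j) \<longlonglongrightarrow> l j" for j
  proof -
    have "continuous_on UNIV (\<lambda>x::'i\<Rightarrow>real. x j)" by simp
    from continuous_on_tendsto_compose[OF this \<open>(X \<circ> r) \<longlonglongrightarrow> l\<close>] show ?thesis by (simp add: o_def)
  qed
  ultimately show ?thesis by blast
qed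

definition freq :: "nat list \<Rightarrow> (nat \<Rightarrow> bool) \<Rightarrow> real" where
  "freq ks Q = real (length (filter Q ks)) / real (length ks)"

lemma length_filter_add:
  "length (filter (\<lambda>k. Q k \<or> R k) ks) + length (filter (\<lambda>k. Q k \<and> R k) ks)
   = length (filter Q ks) + length (filter R ks)"
  by (induction ks) auto

lemma length_filter_mono:
  "(\<And>k. Q k \<Longrightarrow> R k) \<Longrightarrow> length (filter Q ks) \<le> length (filter R ks)"
  by (induction ks) auto

lemma freq_add:
  "freq ks (\<lambda>k. Q k \<or> R k) + freq ks (\<lambda>k. Q k \<and> R k) = freq ks Q + freq ks R"
proof -
  have "real (length (filter (\<lambda>k. Q k \<or> R k) ks)) + real (length (filter (\<lambda>k. Q k \<and> R k) ks))
   = real (length (filter Q ks)) + real (length (filter R ks))"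
    using length_filter_add[of Q R ks] by linarith
  thus ?thesis unfolding freq_def add_divide_distrib[symmetric] by simp
qed

lemma freq_mono: assumes "\<And>k. Q k \<Longrightarrow> R k" shows "freq ks Q \<le> freq ks R"
proof -
  have "length (filter Q ks) \<le> length (filter R ks)" by (rule length_filter_mono) (use assms in auto)
  thus ?thesis unfolding freq_def by (intro divide_right_mono) auto
qed

lemma freq_nonneg: "freq ks Q \<ge> 0"
  unfolding freq_def by simp

lemma freq_le1: "freq ks Q \<le> 1"
proof (cases "ks = []")
  case False
  have "real (length (filter Q ks)) \<le> real (length ks)" by simp
  thus ?thesis unfolding freq_def using False by (simp add: divide_le_eq_1)
qed (simp add: freq_def)

lemma freq_True: "ks \<noteq> [] \<Longrightarrow> freq ks (\<lambda>_. True) = 1"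
  unfolding freq_def by simp

lemma freq_False: "freq ks (\<lambda>_. False) = 0"
  unfolding freq_def by simp

lemma freq_pos: assumes "freq ks Q > 0" shows "\<exists>k. Q k"
proof -
  have "filter Q ks \<noteq> []" using assms by (auto simp: freq_def)
  thus ?thesis by (metis filter_False)
qed

definition detp :: "(nat \<Rightarrow> nat set) \<Rightarrow> (nat \<Rightarrow> bool) \<Rightarrow> bool" where
  "detp W Q \<longleftrightarrow> (\<exists>m. \<forall>k k'. W k \<inter> {..<m} = W k' \<inter> {..<m} \<longrightarrow> Q k = Q k')"

lemma det_level_mono:
  fixes W :: "nat \<Rightarrow> nat set" and m m' :: nat
  assumes "\<forall>k k'. W k \<inter> {..<m} = W k' \<inter> {..<m} \<longrightarrow> Q k = Q k'" "m \<le> m'"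
  shows "\<forall>k k'. W k \<inter> {..<m'} = W k' \<inter> {..<m'} \<longrightarrow> Q k = Q k'"
proof (intro allI impI)
  fix k k' assume "W k \<inter> {..<m'} = W k' \<inter> {..<m'}"
  hence "W k \<inter> {..<m'} \<inter> {..<m} = W k' \<inter> {..<m'} \<inter> {..<m}" by simp
  moreover have "{..<m'} \<inter> {..<m} = {..<m}" using assms(2) by auto
  ultimately have "W k \<inter> {..<m} = W k' \<inter> {..<m}" by (simp add: Int_assoc)
  thus "Q k = Q k'" using assms(1) by blast
qed

lemma det_binop:
  fixes W :: "nat \<Rightarrow> nat set"
  assumes "detp W Q" "detp W R"
  shows "detp W (\<lambda>k. f (Q k) (R k))"
proof -
  obtain m1 where m1: "\<forall>k k'. W k \<inter> {..<m1} = W k' \<inter> {..<m1} \<longrightarrow> Q k = Q k'"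
    using assms(1) unfolding detp_def by metis
  obtain m2 where m2: "\<forall>k k'. W k \<inter> {..<m2} = W k' \<inter> {..<m2} \<longrightarrow> R k = R k'"
    using assms(2) unfolding detp_def by metis
  have A: "\<forall>k k'. W k \<inter> {..<max m1 m2} = W k' \<inter> {..<max m1 m2} \<longrightarrow> Q k = Q k'"
    by (rule det_level_mono[OF m1]) simp
  have B: "\<forall>k k'. W k \<inter> {..<max m1 m2} = W k' \<inter> {..<max m1 m2} \<longrightarrow> R k = R k'"
    by (rule det_level_mono[OF m2]) simp
  have "\<forall>k k'. W k \<inter> {..<max m1 m2} = W k' \<inter> {..<max m1 m2} \<longrightarrow> f (Q k) (R k) = f (Q k') (R k')"
  proof (intro allI impI)
    fix k k' assume h: "W k \<inter> {..<max m1 m2} = W k' \<inter> {..<max m1 m2}"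
    have "Q k = Q k'" using spec[OF spec[OF A, of k], of k'] h by (rule mp)
    moreover have "R k = R k'" using spec[OF spec[OF B, of k], of k'] h by (rule mp)
    ultimately show "f (Q k) (R k) = f (Q k') (R k')" by (simp only:)
  qed
  thus ?thesis unfolding detp_def by (rule exI)
qed

lemma det_conj: "detp W Q \<Longrightarrow> detp W R \<Longrightarrow> detp W (\<lambda>k. Q k \<and> R k)"
  by (rule det_binop[where f="(\<and>)"])
lemma det_disj: "detp W Q \<Longrightarrow> detp W R \<Longrightarrow> detp W (\<lambda>k. Q k \<or> R k)"
  by (rule det_binop[where f="(\<or>)"])
lemma det_not: assumes "detp W Q" shows "detp W (\<lambda>k. \<not> Q k)"
proof -
  obtain m where "\<forall>k k'. W k \<inter> {..<m} = W k' \<inter> {..<m} \<longrightarrow> Q k = Q k'"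
    using assms unfolding detp_def by metis
  hence "\<forall>k k'. W k \<inter> {..<m} = W k' \<inter> {..<m} \<longrightarrow> (\<not> Q k) = (\<not> Q k')" by blast
  thus ?thesis unfolding detp_def by (rule exI)
qed
lemma det_const: "detp W (\<lambda>k. c)"
  unfolding detp_def by auto
lemma det_pref: "detp W (\<lambda>k. \<Phi> (W k \<inter> {..<m}))"
  unfolding detp_def by (intro exI[of _ m]) simp
lemma det_ex_le: "(\<And>j. detp W (Q j)) \<Longrightarrow> detp W (\<lambda>k. \<exists>j\<le>(K::nat). Q j k)"
proof (induction K)
  case 0
  have eq: "(\<lambda>k. \<exists>j\<le>(0::nat). Q j k) = Q 0" by auto
  show ?case unfolding eq by (rule "0.prems")
next
  case (Suc K)
  have eq: "(\<lambda>k. \<exists>j\<le>Suc K. Q j k) = (\<lambda>k. (\<exists>j\<le>K. Q j k) \<or> Q (Suc K) k)"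
    unfolding le_Suc_eq by blast
  have "detp W (\<lambda>k. \<exists>j\<le>K. Q j k)" by (rule Suc.IH) (rule Suc.prems)
  moreover have "detp W (Q (Suc K))" by (rule Suc.prems)
  ultimately have "detp W (\<lambda>k. (\<exists>j\<le>K. Q j k) \<or> Q (Suc K) k)" by (rule det_disj)
  thus ?case unfolding eq .
qed

lemma conv_subseq:
  fixes W :: "nat \<Rightarrow> nat set" and ks :: "nat \<Rightarrow> nat list"
  shows "\<exists>r. strict_mono r \<and> (\<forall>Q. detp W Q \<longrightarrow> convergent (\<lambda>n. freq (ks (r n)) Q))"
proof -
  define X where "X n = (\<lambda>(m, c). freq (ks n) (\<lambda>k. set_encode (W k \<inter> {..<m}) \<in> set_decode c))" for n
  have "X n j \<in> {0..1}" for n j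
    unfolding X_def by (auto simp: freq_nonneg freq_le1 split: prod.splits)
  then obtain r l where r: "strict_mono r" and l: "\<And>j. (\<lambda>n. X (r n) j) \<longlonglongrightarrow> l j"
    using bw_countable[of X] by blast
  have "convergent (\<lambda>n. freq (ks (r n)) Q)" if "detp W Q" for Q
  proof -
    obtain m where m: "\<forall>k k'. W k \<inter> {..<m} = W k' \<inter> {..<m} \<longrightarrow> Q k = Q k'"
      using \<open>detp W Q\<close> unfolding detp_def by blast
    define Z where "Z = {set_encode (W k \<inter> {..<m}) | k. Q k}"
    have "Z \<subseteq> set_encode ` Pow {..<m}" unfolding Z_def by auto
    hence finZ: "finite Z" by (rule finite_subset) auto
    have dz: "set_decode (set_encode Z) = Z" using finZ by simp
    have eq: "(set_encode (W k \<inter> {..<m}) \<in> set_decode (set_encode Z)) = Q k" for k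
    proof
      assume "set_encode (W k \<inter> {..<m}) \<in> set_decode (set_encode Z)"
      hence "set_encode (W k \<inter> {..<m}) \<in> Z" using dz by simp
      then obtain k' where "Q k'" "set_encode (W k \<inter> {..<m}) = set_encode (W k' \<inter> {..<m})"
        unfolding Z_def by blast
      hence "W k \<inter> {..<m} = W k' \<inter> {..<m}" by (simp add: set_encode_eq)
      thus "Q k" using m \<open>Q k'\<close> by blast
    next
      assume "Q k"
      hence "set_encode (W k \<inter> {..<m}) \<in> Z" unfolding Z_def by blast
      thus "set_encode (W k \<inter> {..<m}) \<in> set_decode (set_encode Z)" using dz by simp
    qed
    have "(\<lambda>n. freq (ks (r n)) Q) = (\<lambda>n. X (r n) (m, set_encode Z))"
      unfolding X_def by (simp only: eq prod.case)
    thus ?thesis using l[of "(m, set_encode Z)"] unfolding convergent_def by auto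
  qed
  hence "\<forall>Q. detp W Q \<longrightarrow> convergent (\<lambda>n. freq (ks (r n)) Q)" by blast
  with r show ?thesis by blast
qed


lemma lim_ge: "X \<longlonglongrightarrow> x \<Longrightarrow> (\<And>n. a \<le> X n) \<Longrightarrow> a \<le> (x::real)"
  by (rule LIMSEQ_le_const) auto
lemma lim_le: "X \<longlonglongrightarrow> x \<Longrightarrow> (\<And>n. X n \<le> a) \<Longrightarrow> x \<le> (a::real)"
  by (rule LIMSEQ_le_const2) auto
lemma lim_mono: "X \<longlonglongrightarrow> x \<Longrightarrow> Y \<longlonglongrightarrow> y \<Longrightarrow> (\<And>n. X n \<le> Y n) \<Longrightarrow> x \<le> (y::real)"
  by (rule LIMSEQ_le) auto

primrec pathf :: "(nat \<Rightarrow> nat set \<Rightarrow> bool) \<Rightarrow> nat \<Rightarrow> nat set" where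
  "pathf g 0 = {}"
| "pathf g (Suc m) = (if g (Suc m) (pathf g m) then pathf g m else insert m (pathf g m))"

lemma pathf_sub: "pathf g m \<subseteq> {..<m}"
  by (induction m) auto

lemma pathf_Suc_restr: "pathf g (Suc m) \<inter> {..<m} = pathf g m"
proof -
  have a: "pathf g m \<inter> {..<m} = pathf g m" using pathf_sub[of g m] by (rule Int_absorb2)
  have b: "insert m (pathf g m) \<inter> {..<m} = pathf g m \<inter> {..<m}" by auto
  show ?thesis using a b by simp
qed

lemma pathf_restr: "n \<le> m \<Longrightarrow> pathf g m \<inter> {..<n} = pathf g n"
proof (induction m)
  case 0 thus ?case by simp
next
  case (Suc m)
  show ?case
  proof (cases "n = Suc m")
    case True thus ?thesis using pathf_sub[of g "Suc m"] by (simp add: Int_absorb2)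
  next
    case False
    hence "n \<le> m" using Suc.prems by simp
    hence e: "{..<m} \<inter> {..<n} = {..<n}" by auto
    have "pathf g (Suc m) \<inter> {..<n} = pathf g (Suc m) \<inter> {..<m} \<inter> {..<n}"
      by (simp only: Int_assoc e)
    also have "\<dots> = pathf g m \<inter> {..<n}" by (simp only: pathf_Suc_restr)
    also have "\<dots> = pathf g n" using Suc.IH \<open>n \<le> m\<close> by simp
    finally show ?thesis .
  qed
qed

lemma pathf_limit: "{i. i \<in> pathf g (Suc i)} \<inter> {..<m} = pathf g m"
proof (rule set_eqI)
  fix i
  show "i \<in> {i. i \<in> pathf g (Suc i)} \<inter> {..<m} \<longleftrightarrow> i \<in> pathf g m"
  proof (cases "i < m")
    case True
    have "pathf g m \<inter> {..<Suc i} = pathf g (Suc i)" using True by (intro pathf_restr) simp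
    hence "i \<in> pathf g (Suc i) \<longleftrightarrow> i \<in> pathf g m \<inter> {..<Suc i}" by (simp only:)
    thus ?thesis using True by blast
  next
    case False
    thus ?thesis using pathf_sub[of g m] by blast
  qed
qed

lemma geom_half: "(\<Sum>j\<le>K. (1/2::real)^j) = 2 - (1/2)^K"
  by (induction K) auto

locale limgame =
  fixes W :: "nat \<Rightarrow> nat set" and ks :: "nat \<Rightarrow> nat list" and v :: real
  assumes CL: "\<And>A. (\<And>m. \<exists>k. A \<inter> {..<m} \<subseteq> W k) \<Longrightarrow> \<exists>k. A \<subseteq> W k"
    and ne: "\<And>n. ks n \<noteq> []"
    and col: "\<And>n i. i < n \<Longrightarrow> freq (ks n) (\<lambda>k. i \<in> W k) \<ge> v - inverse (real (Suc n))"
begin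

definition r where
  "r = (SOME r. strict_mono r \<and> (\<forall>Q. detp W Q \<longrightarrow> convergent (\<lambda>n. freq (ks (r n)) Q)))"

lemma r_prop: "strict_mono r \<and> (\<forall>Q. detp W Q \<longrightarrow> convergent (\<lambda>n. freq (ks (r n)) Q))"
  unfolding r_def by (rule someI_ex[OF conv_subseq[of W ks]])

definition Lim where "Lim Q = lim (\<lambda>n. freq (ks (r n)) Q)"

lemma L_tendsto: "detp W Q \<Longrightarrow> (\<lambda>n. freq (ks (r n)) Q) \<longlonglongrightarrow> Lim Q"
  unfolding Lim_def using r_prop convergent_LIMSEQ_iff by blast

lemma L_nonneg: "detp W Q \<Longrightarrow> Lim Q \<ge> 0"
  by (rule lim_ge[OF L_tendsto]) (auto simp: freq_nonneg)

lemma L_le1: "detp W Q \<Longrightarrow> Lim Q \<le> 1"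
  by (rule lim_le[OF L_tendsto]) (auto simp: freq_le1)

lemma L_const: "Lim (\<lambda>_. c) = (if c then 1 else 0)"
proof -
  have "(\<lambda>n. freq (ks (r n)) (\<lambda>_. c)) = (\<lambda>n. if c then 1 else 0)"
    using ne by (auto simp: freq_True freq_False)
  hence "(\<lambda>n. freq (ks (r n)) (\<lambda>_. c)) \<longlonglongrightarrow> (if c then 1 else 0)" by simp
  moreover have "(\<lambda>n. freq (ks (r n)) (\<lambda>_. c)) \<longlonglongrightarrow> Lim (\<lambda>_. c)"
    by (rule L_tendsto) (rule det_const)
  ultimately show ?thesis using LIMSEQ_unique by blast
qed

lemma L_add: assumes "detp W Q" "detp W R"
  shows "Lim (\<lambda>k. Q k \<or> R k) + Lim (\<lambda>k. Q k \<and> R k) = Lim Q + Lim R"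
proof -
  have a: "(\<lambda>n. freq (ks (r n)) (\<lambda>k. Q k \<or> R k) + freq (ks (r n)) (\<lambda>k. Q k \<and> R k))
      \<longlonglongrightarrow> Lim (\<lambda>k. Q k \<or> R k) + Lim (\<lambda>k. Q k \<and> R k)"
    by (intro tendsto_add L_tendsto det_conj det_disj assms)
  have b: "(\<lambda>n. freq (ks (r n)) Q + freq (ks (r n)) R) \<longlonglongrightarrow> Lim Q + Lim R"
    by (intro tendsto_add L_tendsto assms)
  show ?thesis using a b unfolding freq_add using LIMSEQ_unique by blast
qed

lemma L_mono: assumes "detp W Q" "detp W R" "\<And>k. Q k \<Longrightarrow> R k"
  shows "Lim Q \<le> Lim R"
  by (rule lim_mono[OF L_tendsto[OF assms(1)] L_tendsto[OF assms(2)]]) (rule freq_mono, rule assms(3))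

lemma L_pos: assumes "detp W Q" "Lim Q > 0" shows "\<exists>k. Q k"
proof (rule ccontr)
  assume "\<not> (\<exists>k. Q k)"
  hence "Q = (\<lambda>_. False)" by auto
  thus False using assms(2) by (simp add: L_const)
qed

lemma L_col: "Lim (\<lambda>k. i \<in> W k) \<ge> v"
proof -
  have d: "detp W (\<lambda>k. i \<in> W k)"
  proof -
    have "(\<lambda>k. i \<in> W k) = (\<lambda>k. (\<lambda>P. i \<in> P) (W k \<inter> {..<Suc i}))" by auto
    thus ?thesis using det_pref[of W "\<lambda>P. i \<in> P" "Suc i"] by simp
  qed
  have lim: "(\<lambda>n. v - inverse (real (Suc n))) \<longlonglongrightarrow> v"
    using tendsto_diff[OF tendsto_const LIMSEQ_inverse_real_of_nat, of v] by simp
  have "\<forall>n\<ge>Suc i. v - inverse (real (Suc n)) \<le> freq (ks (r n)) (\<lambda>k. i \<in> W k)"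
  proof (intro allI impI)
    fix n assume "Suc i \<le> n"
    have "n \<le> r n" using r_prop seq_suble by blast
    hence "i < r n" using \<open>Suc i \<le> n\<close> by simp
    hence "freq (ks (r n)) (\<lambda>k. i \<in> W k) \<ge> v - inverse (real (Suc (r n)))" by (rule col)
    moreover have "inverse (real (Suc (r n))) \<le> inverse (real (Suc n))"
      using \<open>n \<le> r n\<close> by (simp add: le_imp_inverse_le)
    ultimately show "v - inverse (real (Suc n)) \<le> freq (ks (r n)) (\<lambda>k. i \<in> W k)" by linarith
  qed
  thus ?thesis using LIMSEQ_le[OF lim L_tendsto[OF d]] by blast
qed

lemma L_disj: assumes "detp W Q" "detp W R" "\<And>k. \<not> (Q k \<and> R k)"
  shows "Lim (\<lambda>k. Q k \<or> R k) = Lim Q + Lim R"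
proof -
  have "(\<lambda>k. Q k \<and> R k) = (\<lambda>_. False)" using assms(3) by auto
  thus ?thesis using L_add[OF assms(1,2)] by (simp add: L_const)
qed

lemma L_union: assumes "detp W Q" "detp W R"
  shows "Lim (\<lambda>k. Q k \<or> R k) \<le> Lim Q + Lim R"
  using L_add[OF assms] L_nonneg[OF det_conj[OF assms]] by linarith

lemma L_not: assumes "detp W Q" shows "Lim (\<lambda>k. \<not> Q k) = 1 - Lim Q"
proof -
  have "Lim (\<lambda>k. Q k \<or> \<not> Q k) = Lim Q + Lim (\<lambda>k. \<not> Q k)"
    by (rule L_disj[OF assms det_not[OF assms]]) simp
  moreover have "(\<lambda>k. Q k \<or> \<not> Q k) = (\<lambda>_. True)" by simp
  ultimately show ?thesis by (simp add: L_const)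
qed

lemma L_diff: assumes "detp W Q" "detp W R" "\<And>k. R k \<Longrightarrow> Q k"
  shows "Lim (\<lambda>k. Q k \<and> \<not> R k) = Lim Q - Lim R"
proof -
  have "Lim (\<lambda>k. R k \<or> (Q k \<and> \<not> R k)) = Lim R + Lim (\<lambda>k. Q k \<and> \<not> R k)"
    by (rule L_disj[OF assms(2) det_conj[OF assms(1) det_not[OF assms(2)]]]) simp
  moreover have "(\<lambda>k. R k \<or> (Q k \<and> \<not> R k)) = Q" using assms(3) by auto
  ultimately show ?thesis by simp
qed

lemma L_ex_le: assumes "\<And>j. detp W (Q j)"
  shows "Lim (\<lambda>k. \<exists>j\<le>(K::nat). Q j k) \<le> (\<Sum>j\<le>K. Lim (Q j))"
proof (induction K)
  case 0
  have e: "(\<lambda>k. \<exists>j\<le>(0::nat). Q j k) = Q 0" by auto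
  show ?case unfolding e by simp
next
  case (Suc K)
  have eq: "(\<lambda>k. \<exists>j\<le>Suc K. Q j k) = (\<lambda>k. (\<exists>j\<le>K. Q j k) \<or> Q (Suc K) k)"
    unfolding le_Suc_eq by blast
  have "Lim (\<lambda>k. (\<exists>j\<le>K. Q j k) \<or> Q (Suc K) k) \<le> Lim (\<lambda>k. \<exists>j\<le>K. Q j k) + Lim (Q (Suc K))"
    by (rule L_union[OF det_ex_le[OF assms] assms])
  thus ?case using Suc.IH unfolding eq by (simp add: add_mono)
qed

end


context limgame begin

definition cover :: "nat \<Rightarrow> nat \<Rightarrow> nat \<Rightarrow> bool" where
  "cover K m k' \<longleftrightarrow> (\<exists>k\<le>K. W k' \<inter> {..<m} \<subseteq> W k)"

lemma det_cover: "detp W (cover K m)"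
proof -
  have "cover K m = (\<lambda>k'. (\<lambda>P. \<exists>k\<le>K. P \<subseteq> W k) (W k' \<inter> {..<m}))"
    unfolding cover_def by (rule refl)
  thus ?thesis using det_pref[of W "\<lambda>P. \<exists>k\<le>K. P \<subseteq> W k" m] by simp
qed

lemma cover_anti: "m \<le> m' \<Longrightarrow> cover K m' k \<Longrightarrow> cover K m k"
  unfolding cover_def by (meson Int_mono order_refl lessThan_subset_iff subset_trans)

lemma cover_mono: "K \<le> K' \<Longrightarrow> cover K m k \<Longrightarrow> cover K' m k"
  unfolding cover_def by (meson order_trans)

definition G :: "nat \<Rightarrow> nat \<Rightarrow> real" where "G m K = Lim (cover K m)"

lemma G_anti: "m \<le> m' \<Longrightarrow> G m' K \<le> G m K"
  unfolding G_def by (rule L_mono[OF det_cover det_cover]) (rule cover_anti)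

lemma G_mono: "K \<le> K' \<Longrightarrow> G m K \<le> G m K'"
  unfolding G_def by (rule L_mono[OF det_cover det_cover]) (rule cover_mono)

lemma G_nonneg: "G m K \<ge> 0" unfolding G_def by (rule L_nonneg[OF det_cover])
lemma G_le1: "G m K \<le> 1" unfolding G_def by (rule L_le1[OF det_cover])

definition C :: "nat \<Rightarrow> real" where "C K = (INF m. G m K)"

lemma bdd_G: "bdd_below (range (\<lambda>m. G m K))"
  using G_nonneg by (intro bdd_belowI) auto

lemma G_tendsto: "(\<lambda>m. G m K) \<longlonglongrightarrow> C K"
  unfolding C_def by (rule LIMSEQ_decseq_INF[OF bdd_G]) (auto simp: decseq_def G_anti)

lemma C_le_G: "C K \<le> G m K"
  unfolding C_def by (rule cINF_lower[OF bdd_G]) simp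

lemma C_nonneg: "C K \<ge> 0"
  using lim_ge[OF G_tendsto G_nonneg] .

lemma C_le1: "C K \<le> 1"
  using lim_le[OF G_tendsto G_le1] .

lemma C_mono: "K \<le> K' \<Longrightarrow> C K \<le> C K'"
  by (rule lim_mono[OF G_tendsto G_tendsto]) (rule G_mono)

lemma tight: assumes "\<epsilon> > 0" shows "\<exists>K. C K > 1 - \<epsilon>"
proof (rule ccontr)
  assume "\<not> (\<exists>K. C K > 1 - \<epsilon>)"
  hence CK: "C K \<le> 1 - \<epsilon>" for K by (simp add: not_less)
  define \<delta> where "\<delta> j = \<epsilon> / 4 * (1/2)^j" for j :: nat
  have \<delta>pos: "\<delta> j > 0" for j unfolding \<delta>_def using assms by simp
  have "\<exists>m. G m j \<le> C j + \<delta> j" for j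
  proof -
    have "\<forall>\<^sub>F m in sequentially. dist (G m j) (C j) < \<delta> j"
      using G_tendsto[of j] \<delta>pos[of j] by (rule tendstoD)
    then obtain m where "dist (G m j) (C j) < \<delta> j" using eventually_sequentially by auto
    hence "G m j \<le> C j + \<delta> j" by (simp add: dist_real_def)
    thus ?thesis by blast
  qed
  then obtain mK where mK: "\<And>j. G (mK j) j \<le> C j + \<delta> j" by metis
  define D where "D K k' = (\<forall>j\<le>K. \<not> cover j (mK j) k')" for K k'
  have detD: "detp W (D K)" for K
  proof -
    have "D K = (\<lambda>k'. \<not> (\<exists>j\<le>K. cover j (mK j) k'))" unfolding D_def by auto
    moreover have "detp W (\<lambda>k'. \<not> (\<exists>j\<le>K. cover j (mK j) k'))"
      by (rule det_not, rule det_ex_le, rule det_cover)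
    ultimately show ?thesis by simp
  qed
  have D_anti: "K \<le> K' \<Longrightarrow> D K' k \<Longrightarrow> D K k" for K K' k
    unfolding D_def by auto
  have mass: "Lim (D K) \<ge> \<epsilon> / 4" for K
  proof -
    define M where "M = (\<Sum>j\<le>K. mK j)"
    have mM: "j \<le> K \<Longrightarrow> mK j \<le> M" for j
      unfolding M_def by (rule member_le_sum) auto
    define E where "E j k' = (cover j (mK j) k' \<and> \<not> cover j M k')" for j k'
    have detE: "detp W (E j)" for j
      unfolding E_def by (rule det_conj[OF det_cover det_not[OF det_cover]])
    have incl: "\<not> cover K M k' \<Longrightarrow> D K k' \<or> (\<exists>j\<le>K. E j k')" for k'
      unfolding D_def E_def using cover_mono by blast
    have "Lim (\<lambda>k'. \<not> cover K M k') \<le> Lim (\<lambda>k'. D K k' \<or> (\<exists>j\<le>K. E j k'))"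
      by (rule L_mono[OF det_not[OF det_cover] det_disj[OF detD det_ex_le[OF detE]]]) (rule incl)
    also have "\<dots> \<le> Lim (D K) + Lim (\<lambda>k'. \<exists>j\<le>K. E j k')"
      by (rule L_union[OF detD det_ex_le[OF detE]])
    also have "\<dots> \<le> Lim (D K) + (\<Sum>j\<le>K. Lim (E j))"
      using L_ex_le[OF detE, of K] by simp
    also have "(\<Sum>j\<le>K. Lim (E j)) \<le> (\<Sum>j\<le>K. \<delta> j)"
    proof (rule sum_mono)
      fix j assume "j \<in> {..K}"
      hence "mK j \<le> M" using mM by simp
      have "Lim (E j) = G (mK j) j - G M j"
        unfolding E_def G_def
        by (rule L_diff[OF det_cover det_cover]) (rule cover_anti[OF \<open>mK j \<le> M\<close>])
      also have "\<dots> \<le> \<delta> j" using mK[of j] C_le_G[of j M] by linarith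
      finally show "Lim (E j) \<le> \<delta> j" .
    qed
    also have "(\<Sum>j\<le>K. \<delta> j) = \<epsilon> / 4 * (2 - (1/2)^K)"
      unfolding \<delta>_def sum_distrib_left[symmetric] geom_half by (rule refl)
    also have "\<dots> \<le> \<epsilon> / 2" using assms by (simp add: field_simps)
    finally have A: "Lim (\<lambda>k'. \<not> cover K M k') \<le> Lim (D K) + \<epsilon> / 2" by simp
    have "Lim (\<lambda>k'. \<not> cover K M k') = 1 - G M K"
      unfolding G_def by (rule L_not[OF det_cover])
    moreover have "G M K \<le> G (mK K) K" by (rule G_anti[OF mM]) simp
    moreover have "\<delta> K \<le> \<epsilon> / 4" unfolding \<delta>_def using assms
      by (simp add: mult_left_le power_le_one)
    ultimately have "Lim (\<lambda>k'. \<not> cover K M k') \<ge> 3 * \<epsilon> / 4"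
      using mK[of K] CK[of K] by linarith
    thus ?thesis using A by linarith
  qed
  define good where "good m P = (\<forall>K. Lim (\<lambda>k'. W k' \<inter> {..<m} = P \<and> D K k') > 0)" for m P
  have detEv: "detp W (\<lambda>k'. W k' \<inter> {..<m} = P \<and> D K k')" for m P K
    by (rule det_conj[OF det_pref[of W "\<lambda>X. X = P" m] detD])
  have good0: "good 0 {}"
    unfolding good_def
  proof
    fix K
    have "(\<lambda>k'. W k' \<inter> {..<0} = {} \<and> D K k') = D K" by simp
    moreover have "Lim (D K) > 0" using mass[of K] assms by linarith
    ultimately show "Lim (\<lambda>k'. W k' \<inter> {..<0} = {} \<and> D K k') > 0" by simp
  qed
  have good_step: "good (Suc m) P \<or> good (Suc m) (insert m P)" if "good m P" for m P
  proof (rule ccontr)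
    assume "\<not> (good (Suc m) P \<or> good (Suc m) (insert m P))"
    then obtain K1 K2 where
      K1: "Lim (\<lambda>k'. W k' \<inter> {..<Suc m} = P \<and> D K1 k') \<le> 0" and
      K2: "Lim (\<lambda>k'. W k' \<inter> {..<Suc m} = insert m P \<and> D K2 k') \<le> 0"
      unfolding good_def by (auto simp: not_less)
    define K where "K = max K1 K2"
    have anti: "Lim (\<lambda>k'. W k' \<inter> {..<m'} = P' \<and> D K k') \<le> Lim (\<lambda>k'. W k' \<inter> {..<m'} = P' \<and> D K0 k')"
      if "K0 \<le> K" for m' P' K0
      by (rule L_mono[OF detEv detEv]) (use D_anti[OF that] in blast)
    have "Lim (\<lambda>k'. W k' \<inter> {..<m} = P \<and> D K k')
       \<le> Lim (\<lambda>k'. (W k' \<inter> {..<Suc m} = P \<and> D K k') \<or> (W k' \<inter> {..<Suc m} = insert m P \<and> D K k'))"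
    proof (rule L_mono[OF detEv det_disj[OF detEv detEv]])
      fix k' assume h: "W k' \<inter> {..<m} = P \<and> D K k'"
      have "W k' \<inter> {..<Suc m} = (if m \<in> W k' then insert m (W k' \<inter> {..<m}) else W k' \<inter> {..<m})"
        by (auto simp: lessThan_Suc)
      thus "(W k' \<inter> {..<Suc m} = P \<and> D K k') \<or> (W k' \<inter> {..<Suc m} = insert m P \<and> D K k')"
        using h by (cases "m \<in> W k'") auto
    qed
    also have "\<dots> \<le> Lim (\<lambda>k'. W k' \<inter> {..<Suc m} = P \<and> D K k') + Lim (\<lambda>k'. W k' \<inter> {..<Suc m} = insert m P \<and> D K k')"
      by (rule L_union[OF detEv detEv])
    also have "\<dots> \<le> 0 + 0"
      using anti[of K1 "Suc m" P] anti[of K2 "Suc m" "insert m P"] K1 K2 unfolding K_def by simp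
    finally have "Lim (\<lambda>k'. W k' \<inter> {..<m} = P \<and> D K k') \<le> 0" by simp
    moreover have "Lim (\<lambda>k'. W k' \<inter> {..<m} = P \<and> D K k') > 0" using that unfolding good_def by blast
    ultimately show False by linarith
  qed
  define path where "path = pathf good"
  have good_path: "good m (path m)" for m
  proof (induction m)
    case 0 thus ?case using good0 unfolding path_def by simp
  next
    case (Suc m)
    thus ?case using good_step[OF Suc] unfolding path_def by auto
  qed
  define A where "A = {i. i \<in> path (Suc i)}"
  have Apref: "A \<inter> {..<m} = path m" for m unfolding A_def path_def by (rule pathf_limit)
  have "\<exists>k. A \<inter> {..<m} \<subseteq> W k" for m
  proof -
    have "Lim (\<lambda>k'. W k' \<inter> {..<m} = path m \<and> D 0 k') > 0" using good_path[of m] unfolding good_def by blast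
    then obtain k' where "W k' \<inter> {..<m} = path m" using L_pos[OF detEv] by blast
    thus ?thesis using Apref[of m] by blast
  qed
  then obtain k0 where k0: "A \<subseteq> W k0" using CL by blast
  have "Lim (\<lambda>k'. W k' \<inter> {..<mK k0} = path (mK k0) \<and> D k0 k') > 0"
    using good_path[of "mK k0"] unfolding good_def by blast
  then obtain k' where k': "W k' \<inter> {..<mK k0} = path (mK k0)" "D k0 k'"
    using L_pos[OF detEv] by blast
  have "cover k0 (mK k0) k'"
    unfolding cover_def using k'(1) Apref[of "mK k0"] k0 by blast
  thus False using k'(2) unfolding D_def by blast
qed

end


context limgame begin

definition p0 :: "nat \<Rightarrow> real" where
  "p0 k = (case k of 0 \<Rightarrow> C 0 | Suc j \<Rightarrow> C (Suc j) - C j)"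

lemma p0_nonneg: "p0 k \<ge> 0"
proof (cases k)
  case 0 thus ?thesis by (simp add: p0_def C_nonneg)
next
  case (Suc j) thus ?thesis using C_mono[of j "Suc j"] by (simp add: p0_def)
qed

lemma p0_psum: "(\<Sum>k<Suc K. p0 k) = C K"
  by (induction K) (auto simp: p0_def)

lemma C_lim: "C \<longlonglongrightarrow> 1"
proof (rule LIMSEQ_I)
  fix e :: real assume "e > 0"
  then obtain K where K: "C K > 1 - e" using tight by blast
  have "norm (C n - 1) < e" if "n \<ge> K" for n
    using C_mono[OF that] C_le1[of n] K by simp
  thus "\<exists>no. \<forall>n\<ge>no. norm (C n - 1) < e" by blast
qed

lemma p0_sums: "p0 sums 1"
proof -
  have "(\<lambda>n. \<Sum>k<Suc n. p0 k) \<longlonglongrightarrow> 1" unfolding p0_psum by (rule C_lim)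
  thus ?thesis unfolding sums_def by (rule LIMSEQ_imp_Suc)
qed

definition g0 :: "nat \<Rightarrow> nat \<Rightarrow> real" where
  "g0 m k = (case k of 0 \<Rightarrow> G m 0 | Suc j \<Rightarrow> G m (Suc j) - G m j)"

lemma g0_tendsto: "(\<lambda>m. g0 m k) \<longlonglongrightarrow> p0 k"
proof (cases k)
  case 0 thus ?thesis by (simp add: g0_def p0_def G_tendsto)
next
  case (Suc j) thus ?thesis by (simp add: g0_def p0_def G_tendsto tendsto_diff)
qed

lemma det_colW: "detp W (\<lambda>k. i \<in> W k)"
proof -
  have "(\<lambda>k. i \<in> W k) = (\<lambda>k. (\<lambda>P. i \<in> P) (W k \<inter> {..<Suc i}))" by auto
  thus ?thesis using det_pref[of W "\<lambda>P. i \<in> P" "Suc i"] by simp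
qed

definition ind :: "nat \<Rightarrow> nat \<Rightarrow> real" where "ind i k = (if i \<in> W k then 1 else 0)"

lemma S_bound: assumes "i < m"
  shows "(\<Sum>k\<le>K. g0 m k * ind i k) \<ge> Lim (\<lambda>k'. cover K m k' \<and> i \<in> W k')"
proof (induction K)
  case 0
  show ?case
  proof (cases "i \<in> W 0")
    case True
    have "Lim (\<lambda>k'. cover 0 m k' \<and> i \<in> W k') \<le> Lim (cover 0 m)"
      by (rule L_mono[OF det_conj[OF det_cover det_colW] det_cover]) simp
    thus ?thesis using True by (simp add: g0_def G_def ind_def)
  next
    case False
    have "(\<lambda>k'. cover 0 m k' \<and> i \<in> W k') = (\<lambda>_. False)"
      using False assms unfolding cover_def by auto
    thus ?thesis using False by (simp add: L_const ind_def)
  qed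
next
  case (Suc K)
  define Q where "Q k' = (cover K m k' \<and> i \<in> W k')" for k'
  define R where "R k' = ((cover (Suc K) m k' \<and> \<not> cover K m k') \<and> i \<in> W k')" for k'
  have dQ: "detp W Q" unfolding Q_def by (rule det_conj[OF det_cover det_colW])
  have dR: "detp W R" unfolding R_def
    by (rule det_conj[OF det_conj[OF det_cover det_not[OF det_cover]] det_colW])
  have eq: "(\<lambda>k'. cover (Suc K) m k' \<and> i \<in> W k') = (\<lambda>k'. Q k' \<or> R k')"
    unfolding Q_def R_def using cover_mono[of K "Suc K"] by auto
  have split: "Lim (\<lambda>k'. Q k' \<or> R k') = Lim Q + Lim R"
    by (rule L_disj[OF dQ dR]) (auto simp: Q_def R_def)
  have R_le: "Lim R \<le> g0 m (Suc K) * ind i (Suc K)"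
  proof (cases "i \<in> W (Suc K)")
    case True
    have "Lim R \<le> Lim (\<lambda>k'. cover (Suc K) m k' \<and> \<not> cover K m k')"
      by (rule L_mono[OF dR det_conj[OF det_cover det_not[OF det_cover]]]) (auto simp: R_def)
    also have "\<dots> = G m (Suc K) - G m K"
      unfolding G_def by (rule L_diff[OF det_cover det_cover]) (auto intro: cover_mono[of K "Suc K"])
    finally show ?thesis using True by (simp add: g0_def ind_def)
  next
    case False
    have "R k' = False" for k'
    proof
      assume "R k'"
      hence c1: "cover (Suc K) m k'" and c2: "\<not> cover K m k'" and iW: "i \<in> W k'"
        unfolding R_def by auto
      obtain k where k: "k \<le> Suc K" "W k' \<inter> {..<m} \<subseteq> W k" using c1 unfolding cover_def by blast
      have "k = Suc K" using c2 k unfolding cover_def by (metis le_SucE)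
      thus False using k iW assms False by blast
    qed simp
    hence "R = (\<lambda>_. False)" by auto
    thus ?thesis using False by (simp add: L_const ind_def)
  qed
  have "(\<Sum>k\<le>Suc K. g0 m k * ind i k) = (\<Sum>k\<le>K. g0 m k * ind i k) + g0 m (Suc K) * ind i (Suc K)"
    by simp
  moreover have "Lim (\<lambda>k'. cover (Suc K) m k' \<and> i \<in> W k') = Lim Q + Lim R"
    unfolding eq by (rule split)
  moreover have "Lim Q \<le> (\<Sum>k\<le>K. g0 m k * ind i k)" using Suc.IH unfolding Q_def .
  ultimately show ?case using R_le by linarith
qed

lemma S_bound2: assumes "i < m"
  shows "(\<Sum>k\<le>K. g0 m k * ind i k) \<ge> v - 1 + G m K"
proof -
  have "Lim (\<lambda>k. i \<in> W k) \<le> Lim (\<lambda>k'. (cover K m k' \<and> i \<in> W k') \<or> \<not> cover K m k')"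
    by (rule L_mono[OF det_colW det_disj[OF det_conj[OF det_cover det_colW] det_not[OF det_cover]]]) auto
  also have "\<dots> \<le> Lim (\<lambda>k'. cover K m k' \<and> i \<in> W k') + Lim (\<lambda>k'. \<not> cover K m k')"
    by (rule L_union[OF det_conj[OF det_cover det_colW] det_not[OF det_cover]])
  also have "Lim (\<lambda>k'. \<not> cover K m k') = 1 - G m K"
    unfolding G_def by (rule L_not[OF det_cover])
  finally show ?thesis using L_col[of i] S_bound[OF assms, of K] by linarith
qed

lemma col_final: "summable (\<lambda>k. p0 k * ind i k) \<and> suminf (\<lambda>k. p0 k * ind i k) \<ge> v"
proof -
  have sp: "summable p0" using p0_sums by (simp add: sums_iff)
  have ind01: "0 \<le> ind i k" "ind i k \<le> 1" for k by (auto simp: ind_def)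
  have nn: "0 \<le> p0 k * ind i k" for k using p0_nonneg[of k] ind01(1)[of k] by (rule mult_nonneg_nonneg)
  have le: "norm (p0 k * ind i k) \<le> p0 k" for k
  proof -
    have "p0 k * ind i k \<le> p0 k * 1" using ind01(2)[of k] p0_nonneg[of k] by (rule mult_left_mono)
    thus ?thesis using nn[of k] by simp
  qed
  have sm: "summable (\<lambda>k. p0 k * ind i k)"
    by (rule summable_comparison_test[OF _ sp]) (use le in blast)
  have part: "(\<Sum>k\<le>K. p0 k * ind i k) \<ge> v - 1 + C K" for K
  proof -
    have X: "(\<lambda>m. v - 1 + G m K) \<longlonglongrightarrow> v - 1 + C K"
      by (intro tendsto_add tendsto_const G_tendsto)
    have Y: "(\<lambda>m. \<Sum>k\<le>K. g0 m k * ind i k) \<longlonglongrightarrow> (\<Sum>k\<le>K. p0 k * ind i k)"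
      by (intro tendsto_sum tendsto_mult_right g0_tendsto)
    have "\<forall>m\<ge>Suc i. v - 1 + G m K \<le> (\<Sum>k\<le>K. g0 m k * ind i k)"
    proof (intro allI impI)
      fix m assume "Suc i \<le> m"
      hence "i < m" by simp
      thus "v - 1 + G m K \<le> (\<Sum>k\<le>K. g0 m k * ind i k)" by (rule S_bound2)
    qed
    hence "\<exists>N. \<forall>m\<ge>N. v - 1 + G m K \<le> (\<Sum>k\<le>K. g0 m k * ind i k)" by blast
    from LIMSEQ_le[OF X Y this] show ?thesis .
  qed
  have bound: "v - 1 + C K \<le> suminf (\<lambda>k. p0 k * ind i k)" for K
  proof -
    have "(\<Sum>k\<le>K. p0 k * ind i k) \<le> suminf (\<lambda>k. p0 k * ind i k)"
      by (rule sum_le_suminf[OF sm]) (simp_all add: nn)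
    thus ?thesis using part[of K] by linarith
  qed
  have T: "(\<lambda>K. v - 1 + C K) \<longlonglongrightarrow> v - 1 + 1"
    by (intro tendsto_add tendsto_const C_lim)
  have "v - 1 + 1 \<le> suminf (\<lambda>k. p0 k * ind i k)" by (rule lim_le[OF T bound])
  thus ?thesis using sm by simp
qed

lemma limgame_result:
  "\<exists>p. (\<forall>k. p k \<ge> 0) \<and> p sums 1 \<and>
     (\<forall>i. summable (\<lambda>k. p k * (if i \<in> W k then 1 else 0)) \<and> suminf (\<lambda>k. p k * (if i \<in> W k then 1 else 0)) \<ge> v)"
  using p0_nonneg p0_sums col_final unfolding ind_def by blast

end


definition indW :: "(nat \<Rightarrow> nat set) \<Rightarrow> nat \<Rightarrow> nat \<Rightarrow> real" where
  "indW W k i = (if i \<in> W k then 1 else 0)"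

lemma indW_01: "0 \<le> indW W k i" "indW W k i \<le> 1"
  by (auto simp: indW_def)

lemma summable_weighted:
  fixes q c :: "nat \<Rightarrow> real"
  assumes "\<And>i. q i \<ge> 0" "summable q" "\<And>i. 0 \<le> c i" "\<And>i. c i \<le> 1"
  shows "summable (\<lambda>i. q i * c i)" "suminf (\<lambda>i. q i * c i) \<le> suminf q" "0 \<le> suminf (\<lambda>i. q i * c i)"
proof -
  have nn: "0 \<le> q i * c i" for i using assms(1)[of i] assms(3)[of i] by (rule mult_nonneg_nonneg)
  have le: "q i * c i \<le> q i" for i
    using mult_left_mono[OF assms(4) assms(1), of i i] by simp
  show sm: "summable (\<lambda>i. q i * c i)"
    by (rule summable_comparison_test[OF _ assms(2)]) (use le nn in auto)
  show "suminf (\<lambda>i. q i * c i) \<le> suminf q" by (rule suminf_le[OF le sm assms(2)])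
  show "0 \<le> suminf (\<lambda>i. q i * c i)" by (rule suminf_nonneg[OF sm nn])
qed

lemma best_response:
  fixes W :: "nat \<Rightarrow> nat set" and q :: "nat \<Rightarrow> real"
  assumes CL: "\<And>A. (\<And>m. \<exists>k. A \<inter> {..<m} \<subseteq> W k) \<Longrightarrow> \<exists>k. A \<subseteq> W k"
    and qnn: "\<And>i. q i \<ge> 0" and qs: "summable q"
  shows "\<exists>k. \<forall>k'. suminf (\<lambda>i. q i * indW W k' i) \<le> suminf (\<lambda>i. q i * indW W k i)"
proof -
  define qW where "qW k = suminf (\<lambda>i. q i * indW W k i)" for k
  have sW: "summable (\<lambda>i. q i * indW W k i)" for k
    using summable_weighted(1)[OF qnn qs indW_01] .
  have qW_le: "qW k \<le> suminf q" for k
    unfolding qW_def using summable_weighted(2)[OF qnn qs indW_01] .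
  have bdd: "bdd_above (range qW)" using qW_le by (intro bdd_aboveI) auto
  define V where "V = (SUP k. qW k)"
  have qW_V: "qW k \<le> V" for k unfolding V_def by (rule cSUP_upper[OF _ bdd]) simp
  define good where "good m P = (\<forall>e>0. \<exists>k. W k \<inter> {..<m} = P \<and> qW k > V - e)" for m P
  have good0: "good 0 {}"
    unfolding good_def
  proof (intro allI impI)
    fix e :: real assume "e > 0"
    hence "V - e < (SUP k. qW k)" unfolding V_def by simp
    then obtain k where "V - e < qW k" using less_cSUP_iff[OF _ bdd] by blast
    thus "\<exists>k. W k \<inter> {..<0} = {} \<and> qW k > V - e" by auto
  qed
  have good_step: "good (Suc m) P \<or> good (Suc m) (insert m P)" if gm: "good m P" for m P
  proof (rule ccontr)
    assume "\<not> (good (Suc m) P \<or> good (Suc m) (insert m P))"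
    then obtain e1 e2 where e1: "e1 > 0" "\<And>k. W k \<inter> {..<Suc m} = P \<Longrightarrow> qW k \<le> V - e1"
      and e2: "e2 > 0" "\<And>k. W k \<inter> {..<Suc m} = insert m P \<Longrightarrow> qW k \<le> V - e2"
      unfolding good_def by (auto simp: not_less)
    have "min e1 e2 > 0" using e1 e2 by simp
    then obtain k where k: "W k \<inter> {..<m} = P" "qW k > V - min e1 e2"
      using gm unfolding good_def by blast
    have "W k \<inter> {..<Suc m} = (if m \<in> W k then insert m (W k \<inter> {..<m}) else W k \<inter> {..<m})"
      by (auto simp: lessThan_Suc)
    hence "W k \<inter> {..<Suc m} = P \<or> W k \<inter> {..<Suc m} = insert m P" using k(1) by simp
    thus False
    proof
      assume "W k \<inter> {..<Suc m} = P"
      hence "qW k \<le> V - e1" by (rule e1(2))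
      thus False using k(2) by linarith
    next
      assume "W k \<inter> {..<Suc m} = insert m P"
      hence "qW k \<le> V - e2" by (rule e2(2))
      thus False using k(2) by linarith
    qed
  qed
  define path where "path = pathf good"
  have good_path: "good m (path m)" for m
  proof (induction m)
    case 0 thus ?case using good0 unfolding path_def by simp
  next
    case (Suc m)
    thus ?case using good_step[OF Suc] unfolding path_def by auto
  qed
  define A where "A = {i. i \<in> path (Suc i)}"
  have Apref: "A \<inter> {..<m} = path m" for m unfolding A_def path_def by (rule pathf_limit)
  have "\<exists>k. A \<inter> {..<m} \<subseteq> W k" for m
  proof -
    obtain k where "W k \<inter> {..<m} = path m" using good_path[of m] unfolding good_def
      using zero_less_one by blast
    thus ?thesis using Apref[of m] by blast
  qed
  then obtain k0 where k0: "A \<subseteq> W k0" using CL by blast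
  have tail: "(\<lambda>m. suminf q - (\<Sum>i<m. q i)) \<longlonglongrightarrow> suminf q - suminf q"
    by (intro tendsto_diff tendsto_const summable_LIMSEQ[OF qs])
  have key: "V - e < qW k0 + (suminf q - (\<Sum>i<m. q i))" if "e > 0" for e m
  proof -
    obtain k where k: "W k \<inter> {..<m} = path m" "qW k > V - e"
      using good_path[of m] \<open>e > 0\<close> unfolding good_def by blast
    have split: "qW k = (\<Sum>j. q (j + m) * indW W k (j + m)) + (\<Sum>i<m. q i * indW W k i)"
      unfolding qW_def by (rule suminf_split_initial_segment[OF sW])
    have "(\<Sum>j. q (j + m) * indW W k (j + m)) \<le> (\<Sum>j. q (j + m))"
      using summable_weighted(2)[of "\<lambda>j. q (j + m)" "\<lambda>j. indW W k (j + m)"] qnn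
        summable_ignore_initial_segment[OF qs] indW_01 by blast
    also have "\<dots> = suminf q - (\<Sum>i<m. q i)"
      using suminf_split_initial_segment[OF qs, of m] by simp
    finally have t: "(\<Sum>j. q (j + m) * indW W k (j + m)) \<le> suminf q - (\<Sum>i<m. q i)" .
    have "(\<Sum>i<m. q i * indW W k i) \<le> (\<Sum>i<m. q i * indW W k0 i)"
    proof (rule sum_mono)
      fix i assume "i \<in> {..<m}"
      hence "i \<in> W k \<Longrightarrow> i \<in> W k0" using k(1) Apref[of m] k0 by blast
      hence "indW W k i \<le> indW W k0 i" by (auto simp: indW_def)
      thus "q i * indW W k i \<le> q i * indW W k0 i" using qnn[of i] by (rule mult_left_mono)
    qed
    also have "\<dots> \<le> qW k0"
      unfolding qW_def
      by (rule sum_le_suminf[OF sW]) (auto intro: mult_nonneg_nonneg qnn indW_01)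
    finally show ?thesis using split t k(2) by linarith
  qed
  have "V \<le> qW k0"
  proof (rule ccontr)
    assume "\<not> V \<le> qW k0"
    hence e: "(V - qW k0) / 2 > 0" by simp
    have "\<forall>\<^sub>F m in sequentially. dist (suminf q - (\<Sum>i<m. q i)) (suminf q - suminf q) < (V - qW k0) / 2"
      using tail e by (rule tendstoD)
    then obtain m where "dist (suminf q - (\<Sum>i<m. q i)) (suminf q - suminf q) < (V - qW k0) / 2"
      using eventually_sequentially by auto
    hence "\<bar>suminf q - (\<Sum>i<m. q i)\<bar> < (V - qW k0) / 2" by (simp add: dist_real_def)
    hence "suminf q - (\<Sum>i<m. q i) < (V - qW k0) / 2" by linarith
    moreover have "V - (V - qW k0) / 2 < qW k0 + (suminf q - (\<Sum>i<m. q i))" using key[OF e, of m] .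
    moreover have "(V - qW k0) / 2 + (V - qW k0) / 2 = V - qW k0" by simp
    ultimately show False by linarith
  qed
  hence "\<forall>k'. qW k' \<le> qW k0" using qW_V order_trans by blast
  thus ?thesis unfolding qW_def by blast
qed


lemma length_filter_snoc: "length (filter Q (ks @ [k])) = length (filter Q ks) + (if Q k then 1 else 0)"
  by simp

lemma mw:
  fixes W :: "nat \<Rightarrow> nat set" and v \<delta> :: real and n :: nat
  assumes hyp: "\<And>q. (\<And>i. q i \<ge> 0) \<Longrightarrow> (\<Sum>i<n. q i) = 1 \<Longrightarrow> \<exists>k. (\<Sum>i<n. q i * indW W k i) \<ge> v"
    and \<delta>: "\<delta> > 0"
  shows "\<exists>ks. ks \<noteq> [] \<and> (\<forall>i<n. freq ks (\<lambda>k. i \<in> W k) \<ge> v - \<delta>)"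
proof (cases "n = 0 \<or> v \<le> \<delta>")
  case True
  have "freq [0] (\<lambda>k. i \<in> W k) \<ge> v - \<delta>" if "i < n" for i
    using True that freq_nonneg[of "[0]" "\<lambda>k. i \<in> W k"] by auto
  thus ?thesis by (intro exI[of _ "[0]"]) auto
next
  case False
  hence n0: "n > 0" and v\<delta>: "v > \<delta>" by auto
  have v1: "v \<le> 1"
  proof -
    define q where "q i = 1 / real n" for i :: nat
    have "(\<Sum>i<n. q i) = 1" unfolding q_def using n0 by simp
    then obtain k where k: "(\<Sum>i<n. q i * indW W k i) \<ge> v" using hyp[of q] unfolding q_def by auto
    have "(\<Sum>i<n. q i * indW W k i) \<le> (\<Sum>i<n. q i)"
      by (rule sum_mono) (simp add: q_def divide_right_mono indW_01)
    thus ?thesis using k \<open>(\<Sum>i<n. q i) = 1\<close> by linarith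
  qed
  define \<epsilon> where "\<epsilon> = \<delta> / 4"
  have \<epsilon>0: "\<epsilon> > 0" and \<epsilon>1: "\<epsilon> \<le> 1/4" using \<delta> v\<delta> v1 unfolding \<epsilon>_def by auto
  define cnt where "cnt ks i = length (filter (\<lambda>k. i \<in> W k) ks)" for ks i
  define w where "w ks i = (1 - \<epsilon>) ^ cnt ks i" for ks i
  define \<Phi> where "\<Phi> ks = (\<Sum>i<n. w ks i)" for ks
  have wpos: "w ks i > 0" for ks i unfolding w_def using \<epsilon>1 by simp
  have \<Phi>pos: "\<Phi> ks > 0" for ks unfolding \<Phi>_def using n0 wpos by (intro sum_pos) auto
  have "\<exists>k. (\<Sum>i<n. (w ks i / \<Phi> ks) * indW W k i) \<ge> v" for ks
  proof (rule hyp)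
    show "0 \<le> w ks i / \<Phi> ks" for i using wpos[of ks i] \<Phi>pos[of ks] by simp
    show "(\<Sum>i<n. w ks i / \<Phi> ks) = 1"
      unfolding sum_divide_distrib[symmetric] \<Phi>_def[symmetric] using \<Phi>pos[of ks] by simp
  qed
  then obtain br where br: "\<And>ks. (\<Sum>i<n. (w ks i / \<Phi> ks) * indW W (br ks) i) \<ge> v" by metis
  have br2: "(\<Sum>i<n. w ks i * indW W (br ks) i) \<ge> v * \<Phi> ks" for ks
  proof -
    have "(\<Sum>i<n. (w ks i / \<Phi> ks) * indW W (br ks) i) = (\<Sum>i<n. w ks i * indW W (br ks) i) / \<Phi> ks"
      unfolding sum_divide_distrib by (rule sum.cong) auto
    thus ?thesis using br[of ks] \<Phi>pos[of ks] by (simp add: le_divide_eq)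
  qed
  have wsnoc: "w (ks @ [k]) i = w ks i - \<epsilon> * (w ks i * indW W k i)" for ks k i
    unfolding w_def cnt_def indW_def by (auto simp: algebra_simps)
  have \<Phi>step: "\<Phi> (ks @ [br ks]) \<le> (1 - \<epsilon> * v) * \<Phi> ks" for ks
  proof -
    have "\<Phi> (ks @ [br ks]) = \<Phi> ks - \<epsilon> * (\<Sum>i<n. w ks i * indW W (br ks) i)"
      unfolding \<Phi>_def wsnoc by (simp add: sum_subtractf sum_distrib_left)
    also have "\<dots> \<le> \<Phi> ks - \<epsilon> * (v * \<Phi> ks)"
      using br2[of ks] \<epsilon>0 by (simp add: mult_left_mono)
    finally show ?thesis by (simp add: algebra_simps)
  qed
  define sq where "sq R = ((\<lambda>ks. ks @ [br ks]) ^^ R) []" for R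
  have sq_Suc: "sq (Suc R) = sq R @ [br (sq R)]" for R unfolding sq_def by simp
  have len_sq: "length (sq R) = R" for R
  proof (induction R)
    case 0 show ?case by (simp add: sq_def)
  next
    case (Suc R) thus ?case by (simp only: sq_Suc length_append_singleton)
  qed
  have "\<epsilon> * v \<le> 1/4 * 1" using \<epsilon>1 v1 \<epsilon>0 v\<delta> \<delta> by (intro mult_mono) auto
  hence ev0: "1 - \<epsilon> * v > 0" by simp
  have \<Phi>sq: "\<Phi> (sq R) \<le> (1 - \<epsilon> * v) ^ R * real n" for R
  proof (induction R)
    case 0
    have "\<Phi> [] = real n" unfolding \<Phi>_def w_def cnt_def by simp
    thus ?case by (simp add: sq_def)
  next
    case (Suc R)
    have "\<Phi> (sq (Suc R)) \<le> (1 - \<epsilon> * v) * \<Phi> (sq R)" unfolding sq_Suc by (rule \<Phi>step)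
    also have "\<dots> \<le> (1 - \<epsilon> * v) * ((1 - \<epsilon> * v) ^ R * real n)"
      using Suc.IH ev0 by (simp add: mult_left_mono)
    finally show ?case by simp
  qed
  define L where "L = ln (real n)"
  have L0: "L \<ge> 0" unfolding L_def using n0 by simp
  define R where "R = nat \<lceil>8 * L / \<delta>^2\<rceil> + 1"
  have R1: "R \<ge> 1" unfolding R_def by simp
  have RL: "real R \<ge> 8 * L / \<delta>^2" unfolding R_def by linarith
  have "freq (sq R) (\<lambda>k. i \<in> W k) \<ge> v - \<delta>" if "i < n" for i
  proof -
    define c where "c = real (cnt (sq R) i)"
    have c0: "c \<ge> 0" unfolding c_def by simp
    have "w (sq R) i \<le> \<Phi> (sq R)"
      unfolding \<Phi>_def using that wpos by (intro member_le_sum) (auto intro: less_imp_le)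
    hence pw: "(1 - \<epsilon>) ^ cnt (sq R) i \<le> (1 - \<epsilon> * v) ^ R * real n"
      using \<Phi>sq[of R] unfolding w_def by linarith
    have pos1: "0 < (1 - \<epsilon>) ^ cnt (sq R) i" using \<epsilon>1 by simp
    have lnle: "ln ((1 - \<epsilon>) ^ cnt (sq R) i) \<le> ln ((1 - \<epsilon> * v) ^ R * real n)"
      by (rule ln_mono[OF pw pos1])
    have e1: "ln ((1 - \<epsilon>) ^ cnt (sq R) i) = c * ln (1 - \<epsilon>)" unfolding c_def by (rule ln_realpow)
    have "(1 - \<epsilon> * v) ^ R \<noteq> 0" using ev0 by simp
    moreover have "real n \<noteq> 0" using n0 by simp
    ultimately have e2: "ln ((1 - \<epsilon> * v) ^ R * real n) = real R * ln (1 - \<epsilon> * v) + L"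
      unfolding L_def ln_mult ln_realpow by simp
    have "c * ln (1 - \<epsilon>) \<le> real R * ln (1 - \<epsilon> * v) + L"
      using lnle unfolding e1 e2 .
    moreover have "ln (1 - \<epsilon> * v) \<le> - (\<epsilon> * v)"
      using ln_le_minus_one[OF ev0] by simp
    moreover have "- \<epsilon> - 2 * \<epsilon>^2 \<le> ln (1 - \<epsilon>)"
      using \<epsilon>0 \<epsilon>1 by (intro ln_one_minus_pos_lower_bound) auto
    ultimately have A: "c * (- \<epsilon> - 2 * \<epsilon>^2) \<le> - real R * (\<epsilon> * v) + L"
    proof -
      assume a: "c * ln (1 - \<epsilon>) \<le> real R * ln (1 - \<epsilon> * v) + L"
        and b: "ln (1 - \<epsilon> * v) \<le> - (\<epsilon> * v)" and d: "- \<epsilon> - 2 * \<epsilon>^2 \<le> ln (1 - \<epsilon>)"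
      have "c * (- \<epsilon> - 2 * \<epsilon>^2) \<le> c * ln (1 - \<epsilon>)" using d c0 by (rule mult_left_mono)
      moreover have "real R * ln (1 - \<epsilon> * v) \<le> real R * (- (\<epsilon> * v))"
        using b by (rule mult_left_mono) simp
      ultimately show ?thesis using a by linarith
    qed
    have B: "\<epsilon> * (c * (1 + 2 * \<epsilon>)) \<ge> \<epsilon> * (real R * v) - L"
      using A by (simp add: algebra_simps power2_eq_square)
    have C: "c * (1 + 2 * \<epsilon>) \<ge> real R * v - L / \<epsilon>"
    proof -
      have "\<epsilon> * (c * (1 + 2 * \<epsilon>)) \<ge> \<epsilon> * (real R * v - L / \<epsilon>)"
        using B \<epsilon>0 by (simp add: right_diff_distrib)
      thus ?thesis using \<epsilon>0 by (simp add: mult_le_cancel_left_pos)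
    qed
    have D: "L / \<epsilon> \<le> real R * \<delta> / 2"
    proof -
      have "L / \<epsilon> = (8 * L / \<delta>^2) * \<delta> / 2" unfolding \<epsilon>_def using \<delta> by (simp add: field_simps power2_eq_square)
      also have "\<dots> \<le> real R * \<delta> / 2"
      proof -
        have "(8 * L / \<delta>^2) * \<delta> \<le> real R * \<delta>" using RL \<delta> by (intro mult_right_mono) auto
        thus ?thesis by simp
      qed
      finally show ?thesis .
    qed
    have E: "c \<ge> real R * (v - \<delta>)"
    proof (rule ccontr)
      assume "\<not> c \<ge> real R * (v - \<delta>)"
      hence "c < real R * (v - \<delta>)" by simp
      hence "c * (1 + 2 * \<epsilon>) < real R * (v - \<delta>) * (1 + 2 * \<epsilon>)"
        using \<epsilon>0 by (intro mult_strict_right_mono) auto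
      also have "\<dots> \<le> real R * (v - \<delta> / 2)"
      proof -
        have "(v - \<delta>) * (1 + 2 * \<epsilon>) \<le> v - \<delta> / 2"
        proof -
          have "(v - \<delta>) * (1 + 2 * \<epsilon>) = (v - \<delta>) + (\<delta> / 2) * (v - \<delta>)"
            unfolding \<epsilon>_def by (simp add: algebra_simps)
          also have "(\<delta> / 2) * (v - \<delta>) \<le> (\<delta> / 2) * 1"
            using v1 \<delta> by (intro mult_left_mono) auto
          finally show ?thesis by simp
        qed
        thus ?thesis by (simp add: mult.assoc mult_left_mono)
      qed
      finally have F: "c * (1 + 2 * \<epsilon>) < real R * (v - \<delta> / 2)" .
      have "real R * (v - \<delta> / 2) = real R * v - real R * \<delta> / 2" by (simp add: algebra_simps)
      thus False using F C D by linarith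
    qed
    have "freq (sq R) (\<lambda>k. i \<in> W k) = c / real R"
      unfolding freq_def c_def cnt_def len_sq ..
    thus ?thesis using E R1 by (simp add: le_divide_eq algebra_simps)
  qed
  moreover have "sq R \<noteq> []" using len_sq[of R] R1 by auto
  ultimately show ?thesis by blast
qed


lemma infsum_suminf_nat: "f summable_on (UNIV::nat set) \<Longrightarrow> infsum f UNIV = suminf (f :: nat \<Rightarrow> real)"
proof -
  assume "f summable_on UNIV"
  hence "f sums (infsum f UNIV)" by (intro has_sum_imp_sums has_sum_infsum)
  thus ?thesis by (simp add: sums_iff)
qed

lemma Dist_reindex:
  assumes e: "bij_betw e UNIV X" and p: "p \<in> Dist X"
  shows "\<And>k. p (e k) \<ge> 0" "((\<lambda>k. p (e k)) has_sum 1) UNIV" "(\<lambda>k. p (e k)) sums 1"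
    "summable (\<lambda>k. p (e k))" "suminf (\<lambda>k. p (e k)) = 1"
proof -
  show "\<And>k. p (e k) \<ge> 0" using p unfolding Dist_def by auto
  have "(p has_sum 1) X" using p unfolding Dist_def by auto
  thus hs: "((\<lambda>k. p (e k)) has_sum 1) UNIV" by (subst has_sum_reindex_bij_betw[OF e])
  thus sm: "(\<lambda>k. p (e k)) sums 1" by (rule has_sum_imp_sums)
  thus "summable (\<lambda>k. p (e k))" "suminf (\<lambda>k. p (e k)) = 1" by (simp_all add: sums_iff)
qed

lemma Dist_from_nat:
  assumes e: "bij_betw e UNIV X" and X: "countable X"
    and nn: "\<And>x. f x \<ge> 0" and out: "\<And>x. x \<notin> X \<Longrightarrow> f x = 0"
    and s: "(\<lambda>k. f (e k)) sums 1"
  shows "f \<in> Dist X"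
proof -
  have "((\<lambda>k. f (e k)) has_sum 1) UNIV" by (rule sums_nonneg_imp_has_sum[OF s]) (simp add: nn)
  hence "(f has_sum 1) X" by (subst (asm) has_sum_reindex_bij_betw[OF e])
  moreover have "countable {x. f x \<noteq> 0}"
    by (rule countable_subset[OF _ X]) (use out in blast)
  ultimately show ?thesis unfolding Dist_def using nn out by blast
qed

lemma summable_on_01:
  fixes a c :: "nat \<Rightarrow> real" and b :: "nat \<Rightarrow> nat \<Rightarrow> real"
  assumes a: "\<And>k. a k \<ge> 0" "(a has_sum 1) UNIV" and c: "\<And>i. c i \<ge> 0" "(c has_sum 1) UNIV"
    and b: "\<And>k i. 0 \<le> b k i" "\<And>k i. b k i \<le> 1"
  shows "(\<lambda>(k,i). a k * c i * b k i) summable_on UNIV"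
proof (rule nonneg_bdd_above_summable_on)
  show "\<And>x. x \<in> UNIV \<Longrightarrow> 0 \<le> (\<lambda>(k,i). a k * c i * b k i) x"
    using a c b by (auto intro!: mult_nonneg_nonneg)
  show "bdd_above (sum (\<lambda>(k,i). a k * c i * b k i) ` {F. F \<subseteq> UNIV \<and> finite F})"
  proof (rule bdd_aboveI2)
    fix F :: "(nat \<times> nat) set" assume "F \<in> {F. F \<subseteq> UNIV \<and> finite F}"
    hence fin: "finite F" by simp
    define K where "K = fst ` F"
    define I where "I = snd ` F"
    have fK: "finite K" "finite I" unfolding K_def I_def using fin by auto
    have sub: "F \<subseteq> K \<times> I" unfolding K_def I_def by force
    have "sum (\<lambda>(k,i). a k * c i * b k i) F \<le> sum (\<lambda>(k,i). a k * c i * b k i) (K \<times> I)"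
      by (rule sum_mono2) (use fK sub a c b in \<open>auto intro!: mult_nonneg_nonneg\<close>)
    also have "\<dots> \<le> sum (\<lambda>(k,i). a k * c i) (K \<times> I)"
    proof (rule sum_mono)
      fix x assume "x \<in> K \<times> I"
      obtain k i where x: "x = (k, i)" by (cases x)
      have "a k * c i * b k i \<le> a k * c i * 1"
        by (rule mult_left_mono[OF b(2)]) (simp add: a(1) c(1))
      thus "(\<lambda>(k,i). a k * c i * b k i) x \<le> (\<lambda>(k,i). a k * c i) x" using x by simp
    qed
    also have "\<dots> = sum a K * sum c I"
      by (simp add: sum_product sum.cartesian_product)
    also have "\<dots> \<le> 1 * 1"
    proof (rule mult_mono)
      show "sum a K \<le> 1" by (rule finite_sum_le_has_sum[OF a(2) fK(1)]) (auto simp: a(1))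
      show "sum c I \<le> 1" by (rule finite_sum_le_has_sum[OF c(2) fK(2)]) (auto simp: c(1))
    qed (auto intro: sum_nonneg a(1) c(1))
    finally show "sum (\<lambda>(k,i). a k * c i * b k i) F \<le> 1" by simp
  qed
qed

lemma fubini01:
  fixes a c :: "nat \<Rightarrow> real" and b :: "nat \<Rightarrow> nat \<Rightarrow> real"
  assumes a: "\<And>k. a k \<ge> 0" "(a has_sum 1) UNIV" and c: "\<And>i. c i \<ge> 0" "(c has_sum 1) UNIV"
    and b: "\<And>k i. 0 \<le> b k i" "\<And>k i. b k i \<le> 1"
  shows "infsum (\<lambda>(k,i). a k * c i * b k i) UNIV = (\<Sum>k. a k * (\<Sum>i. c i * b k i))"
proof -
  have sm: "(\<lambda>(k,i). a k * c i * b k i) summable_on (UNIV \<times> UNIV)"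
    using summable_on_01[OF a c b] by simp
  have "infsum (\<lambda>(k,i). a k * c i * b k i) (UNIV \<times> UNIV)
        = infsum (\<lambda>k. infsum (\<lambda>i. a k * c i * b k i) UNIV) UNIV"
    using infsum_Sigma_banach[OF sm] by simp
  moreover have csum: "(\<lambda>i. c i * b k i) summable_on UNIV" for k
    by (rule summable_on_comparison_test[of c]) (use c b in \<open>auto simp: summable_on_def intro: mult_nonneg_nonneg\<close>,
        rule mult_right_le_one_le, auto)
  moreover have inner: "infsum (\<lambda>i. a k * c i * b k i) UNIV = a k * (\<Sum>i. c i * b k i)" for k
  proof -
    have "infsum (\<lambda>i. a k * c i * b k i) UNIV = infsum (\<lambda>i. a k * (c i * b k i)) UNIV"
      by (simp add: mult.assoc)
    also have "\<dots> = a k * infsum (\<lambda>i. c i * b k i) UNIV" by (rule infsum_cmult_right')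
    also have "\<dots> = a k * (\<Sum>i. c i * b k i)" using infsum_suminf_nat[OF csum] by simp
    finally show ?thesis .
  qed
  moreover have "(\<lambda>k. a k * (\<Sum>i. c i * b k i)) summable_on UNIV"
  proof (rule summable_on_comparison_test[of a])
    show "a summable_on UNIV" using a(2) by (auto simp: summable_on_def)
    fix k
    have sc: "summable c" using has_sum_imp_sums[OF c(2)] by (simp add: sums_iff)
    have "(\<Sum>i. c i * b k i) \<le> (\<Sum>i. c i)"
      using summable_weighted(2)[OF c(1) sc b] .
    also have "(\<Sum>i. c i) = 1" using has_sum_imp_sums[OF c(2)] by (simp add: sums_iff)
    finally have le1: "(\<Sum>i. c i * b k i) \<le> 1" .
    have ge0: "(\<Sum>i. c i * b k i) \<ge> 0" using summable_weighted(3)[OF c(1) sc b] .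
    show "a k * (\<Sum>i. c i * b k i) \<le> a k" using mult_left_mono[OF le1 a(1)] by simp
    show "0 \<le> a k * (\<Sum>i. c i * b k i)" using a(1) ge0 by simp
  qed
  ultimately show ?thesis using infsum_suminf_nat by simp
qed


lemma pi_mix_formulas:
  assumes bS: "bij_betw sS UNIV S" and bT: "bij_betw tT UNIV T"
    and p: "p \<in> Dist S" and q: "q \<in> Dist T"
    and pi: "\<And>s t. s \<in> S \<Longrightarrow> t \<in> T \<Longrightarrow> 0 \<le> \<pi> s t \<and> \<pi> s t \<le> 1"
  shows "pi_mix S T \<pi> p q = (\<Sum>k. p (sS k) * (\<Sum>i. q (tT i) * \<pi> (sS k) (tT i)))"
        "pi_mix S T \<pi> p q = (\<Sum>i. q (tT i) * (\<Sum>k. p (sS k) * \<pi> (sS k) (tT i)))"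
proof -
  define a where "a k = p (sS k)" for k
  define c where "c i = q (tT i)" for i
  define b where "b k i = \<pi> (sS k) (tT i)" for k i
  have a: "\<And>k. a k \<ge> 0" "(a has_sum 1) UNIV" unfolding a_def using Dist_reindex[OF bS p] by auto
  have c: "\<And>i. c i \<ge> 0" "(c has_sum 1) UNIV" unfolding c_def using Dist_reindex[OF bT q] by auto
  have inS: "sS k \<in> S" for k using bS by (auto simp: bij_betw_def)
  have inT: "tT i \<in> T" for i using bT by (auto simp: bij_betw_def)
  have b: "\<And>k i. 0 \<le> b k i" "\<And>k i. b k i \<le> 1" unfolding b_def using pi inS inT by auto
  have bij: "bij_betw (map_prod sS tT) (UNIV \<times> UNIV) (S \<times> T)" by (rule bij_betw_map_prod[OF bS bT])
  have e0: "pi_mix S T \<pi> p q = infsum (\<lambda>(k,i). a k * c i * b k i) UNIV"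
  proof -
    have "pi_mix S T \<pi> p q = infsum (\<lambda>(s, t). p s * q t * \<pi> s t) (S \<times> T)" unfolding pi_mix_def ..
    also have "\<dots> = infsum (\<lambda>x. (\<lambda>(s, t). p s * q t * \<pi> s t) (map_prod sS tT x)) (UNIV \<times> UNIV)"
      by (rule infsum_reindex_bij_betw[OF bij, symmetric])
    also have "(\<lambda>x. (\<lambda>(s, t). p s * q t * \<pi> s t) (map_prod sS tT x)) = (\<lambda>(k,i). a k * c i * b k i)"
      unfolding a_def b_def c_def by (auto simp: fun_eq_iff)
    finally show ?thesis by simp
  qed
  show "pi_mix S T \<pi> p q = (\<Sum>k. p (sS k) * (\<Sum>i. q (tT i) * \<pi> (sS k) (tT i)))"
    using fubini01[OF a c b] e0 unfolding a_def b_def c_def by simp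
  have bsw: "bij_betw prod.swap (UNIV :: (nat \<times> nat) set) UNIV"
    by (rule bij_betwI[of _ _ _ prod.swap]) auto
  have "infsum (\<lambda>(i,k). c i * a k * b k i) UNIV = infsum (\<lambda>x. (\<lambda>(i,k). c i * a k * b k i) (prod.swap x)) UNIV"
    by (rule infsum_reindex_bij_betw[OF bsw, symmetric])
  also have "(\<lambda>x. (\<lambda>(i,k). c i * a k * b k i) (prod.swap x)) = (\<lambda>(k,i). a k * c i * b k i)"
    by (auto simp: fun_eq_iff)
  finally have "infsum (\<lambda>(k,i). a k * c i * b k i) UNIV = infsum (\<lambda>(i,k). c i * a k * b k i) UNIV" by simp
  also have "\<dots> = (\<Sum>i. c i * (\<Sum>k. a k * b k i))"
    by (rule fubini01[OF c a]) (use b in auto)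
  finally show "pi_mix S T \<pi> p q = (\<Sum>i. q (tT i) * (\<Sum>k. p (sS k) * \<pi> (sS k) (tT i)))"
    using e0 unfolding a_def b_def c_def by simp
qed

lemma point_Dist:
  fixes e :: "nat \<Rightarrow> 'a"
  assumes e: "bij_betw e UNIV X" and X: "countable X"
  shows "(\<lambda>x. if x = e k then 1 else 0) \<in> Dist X"
proof (rule Dist_from_nat[OF e X])
  show "\<And>x. 0 \<le> (if x = e k then 1 else 0 :: real)" by simp
  have inX: "e k \<in> X" using e by (auto simp: bij_betw_def)
  show "\<And>x. x \<notin> X \<Longrightarrow> (if x = e k then 1 else 0 :: real) = 0" using inX by auto
  have inj: "inj e" using e by (simp add: bij_betw_def)
  have "(\<lambda>j. if e j = e k then 1 else 0 :: real) = (\<lambda>j. if j = k then (\<lambda>_. 1) j else 0)"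
    using inj by (auto simp: fun_eq_iff inj_eq)
  thus "(\<lambda>j. if e j = e k then 1 else 0 :: real) sums 1" using sums_single[of k "\<lambda>_. 1::real"] by simp
qed


lemma CL_from_auc:
  fixes sS :: "nat \<Rightarrow> 'a" and tT :: "nat \<Rightarrow> 'b" and W :: "nat \<Rightarrow> nat set"
  assumes bS: "bij_betw sS UNIV S" and bT: "bij_betw tT UNIV T"
    and auc: "ascending_union_closed (B1_down S T \<pi>)"
    and W_def: "\<And>k. W k = {i. \<pi> (sS k) (tT i) = 1}"
    and h: "\<And>m. \<exists>k. A \<inter> {..<m} \<subseteq> W k"
  shows "\<exists>k. A \<subseteq> W k"
proof (cases "finite A")
  case True
  then obtain m where "A \<subseteq> {..<m}" using finite_nat_bounded by blast
  hence "A \<inter> {..<m} = A" by blast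
  thus ?thesis using h[of m] by metis
next
  case False
  define e where "e = enumerate A"
  have bije: "bij_betw e UNIV A" unfolding e_def using bij_enumerate[OF False] .
  have eA: "e j \<in> A" for j using bije by (auto simp: bij_betw_def)
  have emono: "e i \<le> e j \<longleftrightarrow> i \<le> j" for i j unfolding e_def using False by simp
  have inje: "inj e" using bije by (simp add: bij_betw_def)
  have injT: "inj tT" using bT by (simp add: bij_betw_def)
  have inT: "tT i \<in> T" for i using bT by (auto simp: bij_betw_def)
  have inS: "sS k \<in> S" for k using bS by (auto simp: bij_betw_def)
  define Ch where "Ch j = tT ` e ` {..j}" for j
  have Ch_in: "Ch j \<in> B1_down S T \<pi>" for j
  proof -
    obtain k where k: "A \<inter> {..<Suc (e j)} \<subseteq> W k" using h by blast
    have "Ch j \<subseteq> win_set T \<pi> (sS k)"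
    proof
      fix t assume "t \<in> Ch j"
      then obtain i where i: "i \<le> j" "t = tT (e i)" unfolding Ch_def by auto
      have "e i \<le> e j" using i(1) emono by simp
      hence "e i \<in> A \<inter> {..<Suc (e j)}" using eA by simp
      hence "e i \<in> W k" using k by blast
      thus "t \<in> win_set T \<pi> (sS k)" unfolding win_set_def W_def using i(2) inT by simp
    qed
    thus ?thesis unfolding B1_down_def using inS by blast
  qed
  have Ch_strict: "Ch j \<subset> Ch (Suc j)" for j
  proof
    show "Ch j \<subseteq> Ch (Suc j)" unfolding Ch_def by auto
    have "tT (e (Suc j)) \<in> Ch (Suc j)" unfolding Ch_def by auto
    moreover have "tT (e (Suc j)) \<notin> Ch j"
    proof
      assume "tT (e (Suc j)) \<in> Ch j"
      then obtain i where i: "i \<le> j" "tT (e (Suc j)) = tT (e i)" unfolding Ch_def by auto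
      hence "e (Suc j) = e i" using injT by (simp add: inj_eq)
      hence "Suc j = i" using inje by (simp add: inj_eq)
      thus False using i(1) by simp
    qed
    ultimately show "Ch j \<noteq> Ch (Suc j)" by blast
  qed
  have "(\<Union>j. Ch j) \<in> B1_down S T \<pi>"
    using auc Ch_in Ch_strict unfolding ascending_union_closed_def by blast
  moreover have "(\<Union>j. Ch j) = tT ` A"
  proof
    show "(\<Union>j. Ch j) \<subseteq> tT ` A" unfolding Ch_def using eA by auto
    show "tT ` A \<subseteq> (\<Union>j. Ch j)"
    proof
      fix t assume "t \<in> tT ` A"
      then obtain a where a: "a \<in> A" "t = tT a" by blast
      then obtain j where "a = e j" using bije by (metis bij_betw_inv_into_right UNIV_I)
      hence "t \<in> Ch j" unfolding Ch_def using a by auto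
      thus "t \<in> (\<Union>j. Ch j)" by blast
    qed
  qed
  ultimately obtain s where s: "s \<in> S" "tT ` A \<subseteq> win_set T \<pi> s" unfolding B1_down_def by auto
  obtain k where "s = sS k" using bS s(1) by (metis bij_betw_inv_into_right UNIV_I)
  hence "A \<subseteq> W k" using s(2) unfolding W_def win_set_def by auto
  thus ?thesis by blast
qed


theorem theorem2p2:
  fixes S :: "'a set" and T :: "'b set" and \<pi> :: "'a \<Rightarrow> 'b \<Rightarrow> real"
  assumes "countable_game S T \<pi>"
    and "ascending_union_closed (B1_down S T \<pi>)"
  shows "(\<forall>q\<in>Dist T. \<exists>p\<in>Dist S. \<forall>p'\<in>Dist S. pi_mix S T \<pi> p' q \<le> pi_mix S T \<pi> p q)
    \<and> (\<exists>p\<in>Dist S. \<forall>p'\<in>Dist S.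
          (INF q\<in>Dist T. pi_mix S T \<pi> p' q) \<le> (INF q\<in>Dist T. pi_mix S T \<pi> p q))
    \<and> (SUP p\<in>Dist S. INF q\<in>Dist T. pi_mix S T \<pi> p q)
        = (INF q\<in>Dist T. SUP p\<in>Dist S. pi_mix S T \<pi> p q)"
proof -
  have cS: "countable S" and iS: "infinite S" and cT: "countable T" and iT: "infinite T"
    and pi01: "\<And>s t. s \<in> S \<Longrightarrow> t \<in> T \<Longrightarrow> \<pi> s t \<in> {0, 1}"
    using assms(1) unfolding countable_game_def win_lose_game_def by auto
  define sS where "sS = from_nat_into S"
  define tT where "tT = from_nat_into T"
  have bS: "bij_betw sS UNIV S" unfolding sS_def by (rule bij_betw_from_nat_into[OF cS iS])
  have bT: "bij_betw tT UNIV T" unfolding tT_def by (rule bij_betw_from_nat_into[OF cT iT])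
  have inS: "sS k \<in> S" for k using bS by (auto simp: bij_betw_def)
  have inT: "tT i \<in> T" for i using bT by (auto simp: bij_betw_def)
  have injS: "inj sS" using bS by (simp add: bij_betw_def)
  have injT: "inj tT" using bT by (simp add: bij_betw_def)
  have pi_rng: "\<And>s t. s \<in> S \<Longrightarrow> t \<in> T \<Longrightarrow> 0 \<le> \<pi> s t \<and> \<pi> s t \<le> 1"
    using pi01 by fastforce
  define W where "W k = {i. \<pi> (sS k) (tT i) = 1}" for k
  have piW: "\<pi> (sS k) (tT i) = indW W k i" for k i
    using pi01[OF inS inT] unfolding indW_def W_def by auto
  have CL: "\<exists>k. A \<subseteq> W k" if "\<And>m. \<exists>k. A \<inter> {..<m} \<subseteq> W k" for A
    by (rule CL_from_auc[OF bS bT assms(2)]) (rule W_def, rule that)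
  define qW where "qW q k = (\<Sum>i. q (tT i) * indW W k i)" for q :: "'b \<Rightarrow> real" and k
  have PM: "pi_mix S T \<pi> p q = (\<Sum>k. p (sS k) * qW q k)" if "p \<in> Dist S" "q \<in> Dist T" for p q
    using pi_mix_formulas(1)[where \<pi>=\<pi>, OF bS bT that pi_rng] unfolding qW_def piW by simp
  have PM2: "pi_mix S T \<pi> p q = (\<Sum>i. q (tT i) * (\<Sum>k. p (sS k) * indW W k i))"
    if "p \<in> Dist S" "q \<in> Dist T" for p q
    using pi_mix_formulas(2)[where \<pi>=\<pi>, OF bS bT that pi_rng] unfolding piW by simp
  have qW01: "0 \<le> qW q k \<and> qW q k \<le> 1" if "q \<in> Dist T" for q k
  proof -
    note D = Dist_reindex[OF bT that]
    show ?thesis unfolding qW_def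
      using summable_weighted(2,3)[OF D(1) D(4) indW_01] D(5) by simp
  qed
  define \<delta> where "\<delta> k = (\<lambda>s. if s = sS k then 1 else 0 :: real)" for k
  have \<delta>_in: "\<delta> k \<in> Dist S" for k unfolding \<delta>_def by (rule point_Dist[OF bS cS])
  have PM\<delta>: "pi_mix S T \<pi> (\<delta> k) q = qW q k" if "q \<in> Dist T" for k q
  proof -
    have "(\<lambda>j. \<delta> k (sS j) * qW q j) = (\<lambda>j. if j = k then qW q j else 0)"
      unfolding \<delta>_def using injS by (auto simp: fun_eq_iff inj_eq)
    moreover have "(\<lambda>j. if j = k then qW q j else 0) sums qW q k" by (rule sums_single)
    ultimately show ?thesis using PM[OF \<delta>_in that] by (simp add: sums_iff)
  qed
  have PMle: "pi_mix S T \<pi> p q \<le> c" if "p \<in> Dist S" "q \<in> Dist T" "\<And>k. qW q k \<le> c" for p q c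
  proof -
    note D = Dist_reindex[OF bS that(1)]
    have s1: "summable (\<lambda>k. p (sS k) * qW q k)"
      using summable_weighted(1)[OF D(1) D(4), of "qW q"] qW01[OF that(2)] by blast
    have s2: "summable (\<lambda>k. p (sS k) * c)" using D(4) by (rule summable_mult2)
    have "(\<Sum>k. p (sS k) * qW q k) \<le> (\<Sum>k. p (sS k) * c)"
      by (rule suminf_le[OF _ s1 s2]) (rule mult_left_mono[OF that(3) D(1)])
    also have "\<dots> = c" using suminf_mult2[OF D(4), of c] D(5) by simp
    finally show ?thesis using PM[OF that(1,2)] by simp
  qed
  have PM0: "0 \<le> pi_mix S T \<pi> p q" if "p \<in> Dist S" "q \<in> Dist T" for p q
  proof -
    note D = Dist_reindex[OF bS that(1)]
    have "0 \<le> (\<Sum>k. p (sS k) * qW q k)"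
      using summable_weighted(3)[OF D(1) D(4), of "qW q"] qW01[OF that(2)] by blast
    thus ?thesis using PM[OF that] by simp
  qed
  have PM1: "pi_mix S T \<pi> p q \<le> 1" if "p \<in> Dist S" "q \<in> Dist T" for p q
    by (rule PMle[OF that]) (use qW01[OF that(2)] in blast)
  have BR: "\<exists>k. \<forall>p\<in>Dist S. pi_mix S T \<pi> p q \<le> pi_mix S T \<pi> (\<delta> k) q" if q: "q \<in> Dist T" for q
  proof -
    note D = Dist_reindex[OF bT q]
    obtain k where k: "\<forall>k'. qW q k' \<le> qW q k"
      using best_response[OF CL D(1) D(4)] unfolding qW_def by blast
    have "pi_mix S T \<pi> p q \<le> pi_mix S T \<pi> (\<delta> k) q" if "p \<in> Dist S" for p
      unfolding PM\<delta>[OF q] by (rule PMle[OF that q]) (use k in blast)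
    thus ?thesis by blast
  qed
  have claim1: "\<forall>q\<in>Dist T. \<exists>p\<in>Dist S. \<forall>p'\<in>Dist S. pi_mix S T \<pi> p' q \<le> pi_mix S T \<pi> p q"
    using BR \<delta>_in by blast
  define f where "f q = (SUP p\<in>Dist S. pi_mix S T \<pi> p q)" for q
  have bddA: "bdd_above ((\<lambda>p. pi_mix S T \<pi> p q) ` Dist S)" if "q \<in> Dist T" for q
    using PM1[OF _ that] by (intro bdd_aboveI) blast
  have f_eq: "\<exists>k. f q = qW q k" if q: "q \<in> Dist T" for q
  proof -
    obtain k where k: "\<forall>p\<in>Dist S. pi_mix S T \<pi> p q \<le> pi_mix S T \<pi> (\<delta> k) q" using BR[OF q] by blast
    have "f q = pi_mix S T \<pi> (\<delta> k) q"
      unfolding f_def by (rule cSup_eq_maximum) (use \<delta>_in k in auto)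
    thus ?thesis using PM\<delta>[OF q] by metis
  qed
  have f_ge: "pi_mix S T \<pi> p q \<le> f q" if "p \<in> Dist S" "q \<in> Dist T" for p q
    unfolding f_def by (rule cSUP_upper[OF that(1) bddA[OF that(2)]])
  have f0: "0 \<le> f q" if "q \<in> Dist T" for q
    using PM0[OF \<delta>_in that] f_ge[OF \<delta>_in that] by (meson order_trans)
  have bddB: "bdd_below (f ` Dist T)" using f0 by (intro bdd_belowI) blast
  define v where "v = (INF q\<in>Dist T. f q)"
  have v_le: "v \<le> f q" if "q \<in> Dist T" for q unfolding v_def by (rule cINF_lower[OF bddB that])
  have DT_ne: "Dist T \<noteq> {}" using point_Dist[OF bT cT, of 0] by blast
  have DS_ne: "Dist S \<noteq> {}" using \<delta>_in by blast
  have hyp: "\<exists>k. (\<Sum>i<n. q'' i * indW W k i) \<ge> v"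
    if q''0: "\<And>i. q'' i \<ge> 0" and q''1: "(\<Sum>i<n. q'' i) = 1" for n q''
  proof -
    define qT where "qT t = (if t \<in> tT ` {..<n} then q'' (inv_into UNIV tT t) else 0)" for t
    have qT_tT: "qT (tT j) = (if j \<in> {..<n} then q'' j else 0)" for j
      unfolding qT_def using injT by (auto simp: inj_eq)
    have qT_in: "qT \<in> Dist T"
    proof (rule Dist_from_nat[OF bT cT])
      show "\<And>x. 0 \<le> qT x" unfolding qT_def using q''0 by auto
      show "\<And>x. x \<notin> T \<Longrightarrow> qT x = 0" unfolding qT_def using inT by auto
      show "(\<lambda>k. qT (tT k)) sums 1" unfolding qT_tT using sums_If_finite_set[of "{..<n}" q''] q''1 by simp
    qed
    obtain k where k: "f qT = qW qT k" using f_eq[OF qT_in] by blast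
    have "qW qT k = (\<Sum>i<n. q'' i * indW W k i)"
      unfolding qW_def qT_tT by (subst suminf_finite[of "{..<n}"]) auto
    thus ?thesis using v_le[OF qT_in] k by auto
  qed
  have "\<exists>ks. ks \<noteq> [] \<and> (\<forall>i<n. freq ks (\<lambda>k. i \<in> W k) \<ge> v - inverse (real (Suc n)))" for n
    by (rule mw[OF hyp]) auto
  then obtain ksf where ksf: "\<And>n. ksf n \<noteq> []"
    "\<And>n i. i < n \<Longrightarrow> freq (ksf n) (\<lambda>k. i \<in> W k) \<ge> v - inverse (real (Suc n))"
    by metis
  interpret L: limgame W ksf v
  proof (unfold_locales)
    show "\<And>A. (\<And>m. \<exists>k. A \<inter> {..<m} \<subseteq> W k) \<Longrightarrow> \<exists>k. A \<subseteq> W k" by (fact CL)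
    show "\<And>n. ksf n \<noteq> []" by (fact ksf(1))
    show "\<And>n i. i < n \<Longrightarrow> v - inverse (real (Suc n)) \<le> freq (ksf n) (\<lambda>k. i \<in> W k)" by (fact ksf(2))
  qed
  obtain p where p0: "\<And>k. p k \<ge> 0" and p1: "p sums 1"
    and pcol: "\<And>i. summable (\<lambda>k. p k * (if i \<in> W k then 1 else 0)) \<and> suminf (\<lambda>k. p k * (if i \<in> W k then 1 else 0)) \<ge> v"
    using L.limgame_result by blast
  define pS where "pS s = (if s \<in> S then p (inv_into UNIV sS s) else 0)" for s
  have pS_sS: "pS (sS k) = p k" for k unfolding pS_def using inS injS by simp
  have pS_in: "pS \<in> Dist S"
  proof (rule Dist_from_nat[OF bS cS])
    show "\<And>x. 0 \<le> pS x" unfolding pS_def using p0 by auto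
    show "\<And>x. x \<notin> S \<Longrightarrow> pS x = 0" unfolding pS_def by auto
    show "(\<lambda>k. pS (sS k)) sums 1" unfolding pS_sS using p1 .
  qed
  have pS_good: "v \<le> pi_mix S T \<pi> pS q" if q: "q \<in> Dist T" for q
  proof -
    note D = Dist_reindex[OF bT q]
    define cs where "cs i = (\<Sum>k. p k * indW W k i)" for i
    have cs: "v \<le> cs i" for i using pcol[of i] unfolding cs_def indW_def by simp
    have sp: "summable p" using p1 by (simp add: sums_iff)
    have cs1: "0 \<le> cs i \<and> cs i \<le> 1" for i
      using summable_weighted(2,3)[OF p0 sp, of "\<lambda>k. indW W k i"] indW_01 p1
      unfolding cs_def by (simp add: sums_iff)
    have s1: "summable (\<lambda>i. q (tT i) * cs i)"
      using summable_weighted(1)[OF D(1) D(4), of cs] cs1 by blast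
    have s2: "summable (\<lambda>i. q (tT i) * v)" using D(4) by (rule summable_mult2)
    have "(\<Sum>i. q (tT i) * v) \<le> (\<Sum>i. q (tT i) * cs i)"
      by (rule suminf_le[OF _ s2 s1]) (rule mult_left_mono[OF cs D(1)])
    moreover have "(\<Sum>i. q (tT i) * v) = v" using suminf_mult2[OF D(4), of v] D(5) by simp
    moreover have "pi_mix S T \<pi> pS q = (\<Sum>i. q (tT i) * cs i)"
      using PM2[OF pS_in q] unfolding pS_sS cs_def .
    ultimately show ?thesis by simp
  qed
  have bddC: "bdd_below ((\<lambda>q. pi_mix S T \<pi> p' q) ` Dist T)" if "p' \<in> Dist S" for p'
    using PM0[OF that] by (intro bdd_belowI) blast
  have INF_le_v: "(INF q\<in>Dist T. pi_mix S T \<pi> p' q) \<le> v" if p': "p' \<in> Dist S" for p'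
    unfolding v_def
  proof (rule cINF_greatest[OF DT_ne])
    fix q assume q: "q \<in> Dist T"
    have "(INF q\<in>Dist T. pi_mix S T \<pi> p' q) \<le> pi_mix S T \<pi> p' q" by (rule cINF_lower[OF bddC[OF p'] q])
    also have "\<dots> \<le> f q" by (rule f_ge[OF p' q])
    finally show "(INF q\<in>Dist T. pi_mix S T \<pi> p' q) \<le> f q" .
  qed
  have v_le_pS: "v \<le> (INF q\<in>Dist T. pi_mix S T \<pi> pS q)"
    by (rule cINF_greatest[OF DT_ne]) (rule pS_good)
  have claim2: "\<exists>p\<in>Dist S. \<forall>p'\<in>Dist S.
          (INF q\<in>Dist T. pi_mix S T \<pi> p' q) \<le> (INF q\<in>Dist T. pi_mix S T \<pi> p q)"
    using pS_in INF_le_v v_le_pS by (meson order_trans)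
  have bddD: "bdd_above ((\<lambda>p. INF q\<in>Dist T. pi_mix S T \<pi> p q) ` Dist S)"
  proof (rule bdd_aboveI)
    fix x assume "x \<in> (\<lambda>p. INF q\<in>Dist T. pi_mix S T \<pi> p q) ` Dist S"
    then obtain p' where p': "p' \<in> Dist S" "x = (INF q\<in>Dist T. pi_mix S T \<pi> p' q)" by blast
    obtain q0 where q0: "q0 \<in> Dist T" using DT_ne by blast
    have "x \<le> pi_mix S T \<pi> p' q0" unfolding p'(2) by (rule cINF_lower[OF bddC[OF p'(1)] q0])
    also have "\<dots> \<le> 1" by (rule PM1[OF p'(1) q0])
    finally show "x \<le> 1" .
  qed
  have "(SUP p\<in>Dist S. INF q\<in>Dist T. pi_mix S T \<pi> p q) = v"
  proof (rule antisym)
    show "(SUP p\<in>Dist S. INF q\<in>Dist T. pi_mix S T \<pi> p q) \<le> v"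
      by (rule cSUP_least[OF DS_ne]) (rule INF_le_v)
    have "(INF q\<in>Dist T. pi_mix S T \<pi> pS q) \<le> (SUP p\<in>Dist S. INF q\<in>Dist T. pi_mix S T \<pi> p q)"
      by (rule cSUP_upper[OF pS_in bddD])
    thus "v \<le> (SUP p\<in>Dist S. INF q\<in>Dist T. pi_mix S T \<pi> p q)" using v_le_pS by linarith
  qed
  hence claim3: "(SUP p\<in>Dist S. INF q\<in>Dist T. pi_mix S T \<pi> p q)
        = (INF q\<in>Dist T. SUP p\<in>Dist S. pi_mix S T \<pi> p q)"
    unfolding v_def f_def .
  show ?thesis using claim1 claim2 claim3 by blast
qed


end
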